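(* Consider the social learning setting described in the context, and suppose: (i) (finite KL divergences) $D[f_k\|L_k(\theta)]<\infty$ for all $k=1,\ldots,N$ and all $\theta\in\Theta$; (ii) (initial beliefs) $\mu_{k,0}(\theta)>0$ for all $\theta\in\Theta$ and all $k$; (iii) (unique minimizer) for each receiving agent $k\in\mathcal{R}$ the function $\mathscr{D}_k(\theta)=\sum_{\ell\in\mathcal{S}}\omega_{\ell k}\,D[f_\ell\|L_\ell(\theta)]$ has a unique minimizer $\theta^\star_k=\arg\min_{\theta\in\Theta}\mathscr{D}_k(\theta)$. Then for every receiving agent $k\in\mathcal{R}$, $$\lim_{i\to\infty}\boldsymbol{\mu}_{k,i}(\theta^\star_k)=1\quad\text{almost surely},$$ and for every $\theta\neq\theta^\star_k$, $$\lim_{i\to\infty}\frac{\log\boldsymbol{\mu}_{k,i}(\theta)}{i}=\mathscr{D}_k(\theta^\star_k)-\mathscr{D}_k(\theta)\quad\text{almost surely}$$ (in particular these limits exist almost surely).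
   Context: Data and inference model: there are $N$ agents; agent $k$ observes at each time $i\in\mathbb{N}$ a random variable $\boldsymbol{\xi}_{k,i}\in\mathcal{X}_k$. For each $k$, the variables $\{\boldsymbol{\xi}_{k,i}\}_{i}$ are independent over time and identically distributed with true distribution $f_k$ (data may be dependent across agents). All data are either continuous (densities) or discrete (probability mass functions), with the same nature for all agents. There is a finite set of hypotheses $\Theta=\{1,\ldots,H\}$, and agent $k$ has likelihood functions $L_k(\xi|\theta)$, $\xi\in\mathcal{X}_k$, $\theta\in\Theta$. The KL divergence is $D[f_k\|L_k(\theta)]=\mathbb{E}_{f_k}\big[\log\frac{f_k(\boldsymbol{\xi}_k)}{L_k(\boldsymbol{\xi}_k|\theta)}\big]$. Algorithm: starting from initial beliefs $\mu_{k,0}$ (probability mass functions on $\Theta$), at each time $i\ge1$ each agent $k$ computes $$\boldsymbol{\psi}_{k,i}(\theta)=\frac{\boldsymbol{\mu}_{k,i-1}(\theta)L_k(\boldsymbol{\xi}_{k,i}|\theta)}{\sum_{\theta'\in\Theta}\boldsymbol{\mu}_{k,i-1}(\theta')L_k(\boldsymbol{\xi}_{k,i}|\theta')},\qquad \boldsymbol{\mu}_{k,i}(\theta)=\frac{\exp\{\sum_{\ell=1}^N a_{\ell k}\log\boldsymbol{\psi}_{\ell,i}(\theta)\}}{\sum_{\theta'\in\Theta}\exp\{\sum_{\ell=1}^N a_{\ell k}\log\boldsymbol{\psi}_{\ell,i}(\theta')\}},$$ where $A=[a_{\ell k}]$ is an $N\times N$ matrix with nonnegative entries that is left-stochastic ($\sum_{\ell}a_{\ell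 k}=1$ for all $k$), with $a_{\ell k}=0$ unless agent $k$ receives information from agent $\ell$. Weak graph: the agents are partitioned into $S+R$ disjoint sub-networks $\mathcal{N}_1,\ldots,\mathcal{N}_{S+R}$ (agents listed in increasing order across components), with sending part $\mathcal{S}=\bigcup_{s=1}^S\mathcal{N}_s$ and receiving part $\mathcal{R}=\bigcup_{r=1}^R\mathcal{N}_{S+r}$. The matrix $A$ has the block form $A=\begin{bmatrix}A_{\mathcal{S}}&A_{\mathcal{S}\mathcal{R}}\\0&A_{\mathcal{R}}\end{bmatrix}$ with $A_{\mathcal{S}}=\mathrm{blockdiag}\{A_{\mathcal{N}_1},\ldots,A_{\mathcal{N}_S}\}$ (no links between distinct sending sub-networks and no links from receiving to sending agents). Each sending sub-network is strongly connected (its graph is connected and at least one of its agents has $a_{\ell\ell}>0$), with Perron vector $p^{(s)}$: $A_{\mathcal{N}_s}p^{(s)}=p^{(s)}$, $\mathbb{1}^\top p^{(s)}=1$, all entries positive. Each receiving sub-network is connected, and each receiving sub-network is connected to at least one agent in each sending sub-network. In this setting $I-A_{\mathcal{R}}$ is invertible and $\lim_{i\to\infty}A^i=\begin{bmatrix}E&\Omega\\0&0\end{bmatrix}$, where $E=\mathrm{blockdiag}\{p^{(1)}\mathbb{1}_{N_1}^\top,\ldots,p^{(S)}\mathbb{1}_{N_S}^\top\}$ ($N_s=|\mathcal{N}_s|$) and $\Omega=EA_{\mathcal{S}\mathcal{R}}(I-A_{\mathcal{R}})^{-1}$. The entries of $\Omega$ are denoted $\omega_{\ell k}$, $\ell\in\mathcal{S}$,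 $k\in\mathcal{R}$ (columns indexed by the receiving agents' labels). *)

theory Defs
  imports "HOL-Probability.Probability"
begin

(* Agents are labelled 0..N-1 (the paper uses 1..N). *)

definition KL_div :: "'x measure \<Rightarrow> ('x \<Rightarrow> real) \<Rightarrow> ('x \<Rightarrow> real) \<Rightarrow> real" where
  "KL_div \<nu> f g = (\<integral>x. ln (f x / g x) \<partial>(density \<nu> (\<lambda>x. ennreal (f x))))"

definition KL_finite :: "'x measure \<Rightarrow> ('x \<Rightarrow> real) \<Rightarrow> ('x \<Rightarrow> real) \<Rightarrow> bool" where
  "KL_finite \<nu> f g \<longleftrightarrow>
     (AE x in density \<nu> (\<lambda>x. ennreal (f x)). 0 < g x) \<and>
     integrable (density \<nu> (\<lambda>x. ennreal (f x))) (\<lambda>x. ln (f x / g x))"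

(* belief A N L mu0 x i k theta = mu_{k,i}(theta), where x l j is the observation of agent l at time j *)
fun belief :: "(nat \<Rightarrow> nat \<Rightarrow> real) \<Rightarrow> nat \<Rightarrow> (nat \<Rightarrow> 'x \<Rightarrow> 'h::finite \<Rightarrow> real)
     \<Rightarrow> (nat \<Rightarrow> 'h \<Rightarrow> real) \<Rightarrow> (nat \<Rightarrow> nat \<Rightarrow> 'x) \<Rightarrow> nat \<Rightarrow> nat \<Rightarrow> 'h \<Rightarrow> real" where
  "belief A N L \<mu>0 x 0 = \<mu>0"
| "belief A N L \<mu>0 x (Suc i) =
     (let \<mu> = belief A N L \<mu>0 x i;
          \<psi> = (\<lambda>l \<theta>. \<mu> l \<theta> * L l (x l (Suc i)) \<theta> /
                      (\<Sum>\<theta>'\<in>UNIV. \<mu> l \<theta>' * L l (x l (Suc i)) \<theta>'))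
      in (\<lambda>k \<theta>. exp (\<Sum>l<N. A l k * ln (\<psi> l \<theta>)) /
                 (\<Sum>\<theta>'\<in>UNIV. exp (\<Sum>l<N. A l k * ln (\<psi> l \<theta>')))))"

(* cmp k = index (0-based) of the sub-network containing agent k;
   sub-networks 0..S-1 are sending, S..S+R-1 are receiving *)
definition subnet :: "(nat \<Rightarrow> nat) \<Rightarrow> nat \<Rightarrow> nat \<Rightarrow> nat set" where
  "subnet cmp N j = {k. k < N \<and> cmp k = j}"

definition sending :: "(nat \<Rightarrow> nat) \<Rightarrow> nat \<Rightarrow> nat \<Rightarrow> nat set" where
  "sending cmp N S = {k. k < N \<and> cmp k < S}"

definition receiving :: "(nat \<Rightarrow> nat) \<Rightarrow> nat \<Rightarrow> nat \<Rightarrow> nat set" where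
  "receiving cmp N S = {k. k < N \<and> S \<le> cmp k}"

(* directed edges l -> k (k receives from l) inside the agent set C *)
definition edges_in :: "(nat \<Rightarrow> nat \<Rightarrow> real) \<Rightarrow> nat set \<Rightarrow> (nat \<times> nat) set" where
  "edges_in A C = {(l, k). l \<in> C \<and> k \<in> C \<and> 0 < A l k}"

definition connected_sub :: "(nat \<Rightarrow> nat \<Rightarrow> real) \<Rightarrow> nat set \<Rightarrow> bool" where
  "connected_sub A C \<longleftrightarrow> (\<forall>l\<in>C. \<forall>k\<in>C. (l, k) \<in> (edges_in A C)\<^sup>*)"

definition strongly_connected_sub :: "(nat \<Rightarrow> nat \<Rightarrow> real) \<Rightarrow> nat set \<Rightarrow> bool" where
  "strongly_connected_sub A C \<longleftrightarrow> connected_sub A C \<and> (\<exists>l\<in>C. 0 < A l l)"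

definition weak_graph :: "nat \<Rightarrow> (nat \<Rightarrow> nat \<Rightarrow> real) \<Rightarrow> (nat \<Rightarrow> nat) \<Rightarrow> nat \<Rightarrow> nat \<Rightarrow> bool" where
  "weak_graph N A cmp S R \<longleftrightarrow>
     (\<forall>l<N. \<forall>k<N. 0 \<le> A l k) \<and>
     (\<forall>k<N. (\<Sum>l<N. A l k) = 1) \<and>
     (\<forall>k<N. cmp k < S + R) \<and>
     (\<forall>k k'. k \<le> k' \<longrightarrow> k' < N \<longrightarrow> cmp k \<le> cmp k') \<and>
     (\<forall>j<S + R. subnet cmp N j \<noteq> {}) \<and>
     (\<forall>l<N. \<forall>k<N. cmp l < S \<and> cmp k < S \<and> cmp l \<noteq> cmp k \<longrightarrow> A l k = 0) \<and>
     (\<forall>l<N. \<forall>k<N. S \<le> cmp l \<and> cmp k < S \<longrightarrow> A l k = 0) \<and>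
     (\<forall>s<S. strongly_connected_sub A (subnet cmp N s)) \<and>
     (\<forall>r<R. connected_sub A (subnet cmp N (S + r))) \<and>
     (\<forall>r<R. \<forall>s<S. \<exists>l\<in>subnet cmp N s. \<exists>k\<in>subnet cmp N (S + r). 0 < A l k)"

definition perron_vec :: "(nat \<Rightarrow> nat \<Rightarrow> real) \<Rightarrow> nat set \<Rightarrow> (nat \<Rightarrow> real) \<Rightarrow> bool" where
  "perron_vec A C p \<longleftrightarrow>
     (\<forall>l\<in>C. (\<Sum>l'\<in>C. A l l' * p l') = p l) \<and> sum p C = 1 \<and> (\<forall>l\<in>C. 0 < p l)"

definition inverse_I_minus :: "(nat \<Rightarrow> nat \<Rightarrow> real) \<Rightarrow> nat set \<Rightarrow> (nat \<Rightarrow> nat \<Rightarrow> real) \<Rightarrow> bool" where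
  "inverse_I_minus A Rs B \<longleftrightarrow>
     (\<forall>i\<in>Rs. \<forall>k\<in>Rs. (\<Sum>j\<in>Rs. ((if i = j then 1 else 0) - A i j) * B j k) = (if i = k then 1 else 0)) \<and>
     (\<forall>i\<in>Rs. \<forall>k\<in>Rs. (\<Sum>j\<in>Rs. B i j * ((if j = k then 1 else 0) - A j k)) = (if i = k then 1 else 0))"

(* E = blockdiag{p^(s) 1^T}: E l l' = p l if l, l' in the same sending sub-network *)
definition Emat :: "(nat \<Rightarrow> nat) \<Rightarrow> (nat \<Rightarrow> real) \<Rightarrow> nat \<Rightarrow> nat \<Rightarrow> real" where
  "Emat cmp p l l' = (if cmp l = cmp l' then p l else 0)"

(* Omega = E A_SR (I - A_R)^{-1}, entry (l, k) with l sending, k receiving *)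
definition omega :: "nat \<Rightarrow> (nat \<Rightarrow> nat \<Rightarrow> real) \<Rightarrow> (nat \<Rightarrow> nat) \<Rightarrow> nat \<Rightarrow> (nat \<Rightarrow> real)
     \<Rightarrow> (nat \<Rightarrow> nat \<Rightarrow> real) \<Rightarrow> nat \<Rightarrow> nat \<Rightarrow> real" where
  "omega N A cmp S p B l k =
     (\<Sum>l'\<in>sending cmp N S. Emat cmp p l l' *
        (\<Sum>j\<in>receiving cmp N S. A l' j * B j k))"

definition Dscr :: "nat \<Rightarrow> (nat \<Rightarrow> nat \<Rightarrow> real) \<Rightarrow> (nat \<Rightarrow> nat) \<Rightarrow> nat \<Rightarrow> (nat \<Rightarrow> real)
     \<Rightarrow> (nat \<Rightarrow> nat \<Rightarrow> real) \<Rightarrow> (nat \<Rightarrow> 'x measure) \<Rightarrow> (nat \<Rightarrow> 'x \<Rightarrow> real)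
     \<Rightarrow> (nat \<Rightarrow> 'x \<Rightarrow> 'h \<Rightarrow> real) \<Rightarrow> nat \<Rightarrow> 'h \<Rightarrow> real" where
  "Dscr N A cmp S p B \<nu> f L k \<theta> =
     (\<Sum>l\<in>sending cmp N S. omega N A cmp S p B l k * KL_div (\<nu> l) (f l) (\<lambda>x. L l x \<theta>))"

end

theory Submission
  imports Defs
begin

lemma cesaro0:
  fixes b :: "nat \<Rightarrow> real"
  assumes "b \<longlonglongrightarrow> 0"
  shows "(\<lambda>n. (\<Sum>i<n. b i) / real n) \<longlonglongrightarrow> 0"
proof (rule LIMSEQ_I)
  fix r :: real assume r: "0 < r"
  obtain N0 where N0: "\<And>i. i \<ge> N0 \<Longrightarrow> norm (b i) < r / 2"
    using LIMSEQ_D[OF assms, of "r/2"] r by auto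
  define C where "C = (\<Sum>i<N0. \<bar>b i\<bar>)"
  have C0: "C \<ge> 0" unfolding C_def by (intro sum_nonneg) auto
  obtain N1 :: nat where N1: "2 * C / r < real N1" using reals_Archimedean2 by blast
  show "\<exists>no. \<forall>n\<ge>no. norm ((\<Sum>i<n. b i) / real n - 0) < r"
  proof (intro exI allI impI)
    fix n assume n: "n \<ge> max N0 (max N1 1)"
    hence nN0: "N0 \<le> n" and nN1: "N1 \<le> n" and n1: "1 \<le> n" by auto
    have split: "(\<Sum>i<n. \<bar>b i\<bar>) = C + (\<Sum>i\<in>{N0..<n}. \<bar>b i\<bar>)"
      unfolding C_def using nN0
      by (metis atLeast0LessThan sum.atLeastLessThan_concat zero_le)
    have "(\<Sum>i\<in>{N0..<n}. \<bar>b i\<bar>) \<le> (\<Sum>i\<in>{N0..<n}. r/2)"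
      by (intro sum_mono) (use N0 in \<open>auto simp: less_imp_le\<close>)
    also have "\<dots> = real (n - N0) * (r/2)" by simp
    also have "\<dots> \<le> real n * (r/2)" using r by (intro mult_right_mono) auto
    finally have s2: "(\<Sum>i\<in>{N0..<n}. \<bar>b i\<bar>) \<le> real n * (r/2)" .
    have "\<bar>\<Sum>i<n. b i\<bar> \<le> (\<Sum>i<n. \<bar>b i\<bar>)" by (rule sum_abs)
    also have "\<dots> \<le> C + real n * (r/2)" using split s2 by linarith
    finally have A: "\<bar>\<Sum>i<n. b i\<bar> \<le> C + real n * (r/2)" .
    have "C < real n * (r/2)"
    proof -
      have "2 * C < real N1 * r" using N1 r by (simp add: field_simps)
      also have "\<dots> \<le> real n * r" using nN1 r by (intro mult_right_mono) auto
      finally show ?thesis by simp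
    qed
    with A have "\<bar>\<Sum>i<n. b i\<bar> < real n * r" by linarith
    then show "norm ((\<Sum>i<n. b i) / real n - 0) < r"
      using n1 by (simp add: field_simps)
  qed
qed

lemma cesaro:
  fixes a :: "nat \<Rightarrow> real"
  assumes "a \<longlonglongrightarrow> L"
  shows "(\<lambda>n. (\<Sum>i<n. a i) / real n) \<longlonglongrightarrow> L"
proof -
  have "(\<lambda>n. (\<Sum>i<n. a i - L) / real n) \<longlonglongrightarrow> 0"
    by (rule cesaro0) (rule LIM_zero[OF assms])
  hence "(\<lambda>n. (\<Sum>i<n. a i - L) / real n + L) \<longlonglongrightarrow> 0 + L" by (intro tendsto_add) auto
  moreover have "eventually (\<lambda>n. (\<Sum>i<n. a i - L) / real n + L = (\<Sum>i<n. a i) / real n) sequentially"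
    using eventually_gt_at_top[of 0]
    by eventually_elim (simp add: sum_subtractf field_simps)
  ultimately show ?thesis by (simp add: tendsto_cong)
qed

lemma kf_bounds:
  fixes a :: real
  assumes "1 \<le> a"
  shows "real (nat \<lfloor>a^m\<rfloor>) \<le> a^m" "a^m - 1 < real (nat \<lfloor>a^m\<rfloor>)"
    "1 \<le> nat \<lfloor>a^m\<rfloor>" "a^m \<le> 2 * real (nat \<lfloor>a^m\<rfloor>)"
proof -
  have p1: "1 \<le> a^m" using assms by (simp add: one_le_power)
  hence f1: "1 \<le> \<lfloor>a^m\<rfloor>" by (simp add: le_floor_iff)
  hence eq: "real (nat \<lfloor>a^m\<rfloor>) = real_of_int \<lfloor>a^m\<rfloor>" by simp
  show "real (nat \<lfloor>a^m\<rfloor>) \<le> a^m" unfolding eq by simp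
  show "a^m - 1 < real (nat \<lfloor>a^m\<rfloor>)" unfolding eq by linarith
  show "1 \<le> nat \<lfloor>a^m\<rfloor>" using f1 by linarith
  show "a^m \<le> 2 * real (nat \<lfloor>a^m\<rfloor>)" unfolding eq using f1 by linarith
qed

lemma geo_tele:
  fixes a x :: real
  assumes a: "1 < a" and x: "0 < x"
  shows "(\<Sum>m<n. (if x \<le> a^m then 1 / a^m else 0)) \<le> (a / (a - 1)) / x"
proof -
  define h where "h m = min (1/x) (1 / a^m)" for m
  define c where "c = a / (a - 1)"
  have c0: "0 < c" using a unfolding c_def by simp
  have tm: "(if x \<le> a^m then 1 / a^m else 0) \<le> c * (h m - h (Suc m))" for m
  proof (cases "x \<le> a^m")
    case True
    have am: "0 < a^m" using a by simp
    have hm: "h m = 1 / a^m" unfolding h_def using True x am by (simp add: frac_le)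
    have "1 / a^(Suc m) \<le> 1 / a^m" using a am by (simp add: field_simps)
    hence hs: "h (Suc m) = 1 / a^(Suc m)" unfolding h_def using hm h_def
      by (metis min.absorb_iff2 min.bounded_iff)
    have "c * (h m - h (Suc m)) = (a / (a - 1)) * (1/a^m - 1/(a * a^m))"
      using hm hs c_def by simp
    also have "\<dots> = 1 / a^m" using a am by (simp add: field_simps)
    finally show ?thesis using True by simp
  next
    case False
    have "1 / a^(Suc m) \<le> 1 / a^m" using a by (simp add: field_simps)
    hence "h (Suc m) \<le> h m" unfolding h_def by (intro min.mono) auto
    then show ?thesis using False c0 by (simp add: mult_nonneg_nonneg)
  qed
  have "(\<Sum>m<n. (if x \<le> a^m then 1 / a^m else 0)) \<le> (\<Sum>m<n. c * (h m - h (Suc m)))"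
    by (intro sum_mono tm)
  also have "\<dots> = c * (h 0 - h n)" by (simp add: sum_distrib_left[symmetric] sum_lessThan_telescope')
  also have "\<dots> \<le> c * h 0"
  proof -
    have "0 \<le> h n" unfolding h_def using x a by auto
    thus ?thesis using c0 by (intro mult_left_mono) auto
  qed
  also have "\<dots> \<le> c * (1/x)" using c0 unfolding h_def by (intro mult_left_mono) auto
  finally show ?thesis unfolding c_def by simp
qed

lemma trunc_sum_bound:
  fixes a x :: real
  assumes a: "1 < a" and x: "0 \<le> x"
  shows "(\<Sum>m<n. (if x \<le> real (nat \<lfloor>a^m\<rfloor>) then x^2 / real (nat \<lfloor>a^m\<rfloor>) else 0))
           \<le> (2 * a / (a - 1)) * x"
proof (cases "x = 0")
  case True then show ?thesis by simp
next
  case False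
  hence x0: "0 < x" using x by simp
  have "(\<Sum>m<n. (if x \<le> real (nat \<lfloor>a^m\<rfloor>) then x^2 / real (nat \<lfloor>a^m\<rfloor>) else 0))
        \<le> (\<Sum>m<n. 2 * x^2 * (if x \<le> a^m then 1 / a^m else 0))"
  proof (intro sum_mono)
    fix m
    note kb = kf_bounds[of a m] 
    have k1: "1 \<le> real (nat \<lfloor>a^m\<rfloor>)" using kb a by simp
    have am: "0 < a^m" using a by simp
    show "(if x \<le> real (nat \<lfloor>a^m\<rfloor>) then x^2 / real (nat \<lfloor>a^m\<rfloor>) else 0)
          \<le> 2 * x^2 * (if x \<le> a^m then 1 / a^m else 0)"
    proof (cases "x \<le> real (nat \<lfloor>a^m\<rfloor>)")
      case True
      hence "x \<le> a^m" using kb a by linarith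
      moreover have "x^2 / real (nat \<lfloor>a^m\<rfloor>) \<le> 2 * x^2 * (1 / a^m)"
      proof -
        have "a^m * x^2 \<le> (2 * real (nat \<lfloor>a^m\<rfloor>)) * x^2"
          using kb a by (intro mult_right_mono) auto
        thus ?thesis using k1 am by (simp add: field_simps)
      qed
      ultimately show ?thesis using True by simp
    qed (simp)
  qed
  also have "\<dots> = 2 * x^2 * (\<Sum>m<n. (if x \<le> a^m then 1 / a^m else 0))"
    by (simp add: sum_distrib_left)
  also have "\<dots> \<le> 2 * x^2 * ((a / (a - 1)) / x)"
    by (intro mult_left_mono geo_tele a x0) simp
  also have "\<dots> = (2 * a / (a - 1)) * x" using x0 a by (simp add: field_simps power2_eq_square)
  finally show ?thesis .
qed

lemma pow_ev_ge:
  fixes a c :: real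
  assumes "1 < a"
  shows "\<exists>n0. \<forall>m\<ge>n0. c \<le> a^m"
proof -
  obtain n0 where "c < a^n0" using real_arch_pow[OF assms] by blast
  moreover have "a^n0 \<le> a^m" if "m \<ge> n0" for m using assms that by (intro power_increasing) auto
  ultimately show ?thesis by (meson less_le_trans less_imp_le)
qed

lemma bracket:
  fixes k :: "nat \<Rightarrow> nat"
  assumes "k M \<le> n" and "\<exists>m\<ge>M. n < k m"
  shows "\<exists>m\<ge>M. k m \<le> n \<and> n < k (Suc m)"
proof -
  define P where "P m' \<longleftrightarrow> M \<le> m' \<and> n < k m'" for m'
  have ex: "\<exists>m'. P m'" using assms(2) unfolding P_def by auto
  define m' where "m' = (LEAST m'. P m')"
  have Pm: "P m'" unfolding m'_def using ex by (metis LeastI)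
  have "m' \<noteq> M" using Pm assms(1) unfolding P_def by auto
  hence "M < m'" using Pm unfolding P_def by auto
  define m where "m = m' - 1"
  have m: "m' = Suc m" "M \<le> m" using \<open>M < m'\<close> unfolding m_def by auto
  have "m < m'" using m(1) by simp
  hence "\<not> P m" unfolding m'_def by (rule not_less_Least)
  then show ?thesis using m Pm unfolding P_def by auto
qed

lemma sandwich:
  fixes T :: "nat \<Rightarrow> real"
  assumes mono: "\<And>n. T n \<le> T (Suc n)" and nn: "\<And>n. 0 \<le> T n"
    and lim: "\<And>j. (\<lambda>m. T (nat \<lfloor>(1 + 1 / real (Suc j))^m\<rfloor>) / real (nat \<lfloor>(1 + 1 / real (Suc j))^m\<rfloor>)) \<longlonglongrightarrow> \<mu>"
  shows "(\<lambda>n. T n / real n) \<longlonglongrightarrow> \<mu>"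
proof (rule LIMSEQ_I)
  fix \<epsilon> :: real assume \<epsilon>: "0 < \<epsilon>"
  have \<mu>0: "0 \<le> \<mu>"
    by (rule LIMSEQ_le_const[OF lim[of 0]]) (auto intro!: divide_nonneg_nonneg nn)
  define \<eta> where "\<eta> = min (1/2) (\<epsilon> / (\<mu> + 3))"
  have \<eta>0: "0 < \<eta>" using \<epsilon> \<mu>0 unfolding \<eta>_def by auto
  have "\<eta> \<le> \<epsilon> / (\<mu> + 3)" unfolding \<eta>_def by simp
  hence \<eta>1: "\<eta> * (\<mu> + 3) \<le> \<epsilon>" using \<mu>0 by (simp add: le_divide_eq)
  have "3 * \<eta> \<le> \<eta> * (\<mu> + 3)" using \<eta>0 \<mu>0 by (simp add: algebra_simps)
  hence \<eta>\<epsilon>: "\<eta> < \<epsilon>" using \<eta>1 \<eta>0 by linarith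
  have \<eta>2: "\<eta> \<le> 1/2" unfolding \<eta>_def by (rule min.cobounded1)
  obtain j0 :: nat where "3 / \<eta> < real j0" using reals_Archimedean2 by blast
  hence j: "3 / \<eta> < real (Suc j0)" by simp
  define j where "j = j0"
  note j = j[folded j_def]
  define a where "a = 1 + 1 / real (Suc j)"
  have a1: "1 < a" unfolding a_def by simp
  have a2: "a^2 \<le> 1 + \<eta>"
  proof -
    have js: "3 / real (Suc j) < \<eta>" using j \<eta>0 by (simp add: field_simps)
    have gen: "(1 + 1 / t)^2 = 1 + 2 / t + 1 / t^2" if "t > 0" for t :: real
      using that by (simp add: power2_eq_square field_simps)
    have "a^2 = 1 + 2 / real (Suc j) + 1 / real (Suc j)^2" unfolding a_def
      by (rule gen) simp
    also have "1 / real (Suc j)^2 \<le> 1 / real (Suc j)"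
    proof -
      have "real (Suc j) \<le> real (Suc j)^2" by (simp add: power2_eq_square)
      thus ?thesis by (intro divide_left_mono) auto
    qed
    finally show ?thesis using js by simp
  qed
  define k where "k m = nat \<lfloor>a^m\<rfloor>" for m
  have kpos: "0 < real (k m)" for m using kf_bounds(3)[of a m] a1 unfolding k_def by simp
  have limk: "(\<lambda>m. T (k m) / real (k m)) \<longlonglongrightarrow> \<mu>" using lim[of j] unfolding k_def a_def .
  obtain M1 where M1: "\<And>m. m \<ge> M1 \<Longrightarrow> \<bar>T (k m) / real (k m) - \<mu>\<bar> < \<eta>"
    using LIMSEQ_D[OF limk \<eta>0] by auto
  obtain M2 where M2: "\<And>m. m \<ge> M2 \<Longrightarrow> a / (a - 1) \<le> a^m"
    using pow_ev_ge[OF a1] by blast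
  have ratio: "real (k (Suc m)) \<le> a^2 * real (k m)" if "m \<ge> M2" for m
  proof -
    have "a / (a - 1) \<le> a^m" using M2 that .
    hence "a \<le> a^m * (a - 1)" using a1 by (simp add: field_simps)
    hence "a^m \<le> a * (a^m - 1)" by (simp add: algebra_simps)
    also have "\<dots> \<le> a * real (k m)" using kf_bounds(2)[of a m] a1 unfolding k_def
      by (intro mult_left_mono) auto
    finally have "a * a^m \<le> a^2 * real (k m)" using a1 by (simp add: power2_eq_square mult.assoc)
    moreover have "real (k (Suc m)) \<le> a * a^m" using kf_bounds(1)[of a "Suc m"] a1 unfolding k_def by simp
    ultimately show ?thesis by linarith
  qed
  have unb: "\<exists>m\<ge>M. n < k m" for M n
  proof -
    obtain m where "\<forall>m'\<ge>m. real n + 1 \<le> a^m'" using pow_ev_ge[OF a1] by blast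
    hence "real n + 1 \<le> a^(max m M)" by simp
    hence "n < k (max m M)" using kf_bounds(2)[of a "max m M"] a1 unfolding k_def by linarith
    thus ?thesis by (intro exI[of _ "max m M"]) auto
  qed
  define M where "M = max M1 M2"
  have Tmono: "T x \<le> T y" if "x \<le> y" for x y using lift_Suc_mono_le[of T, OF mono that] .
  show "\<exists>no. \<forall>n\<ge>no. norm (T n / real n - \<mu>) < \<epsilon>"
  proof (intro exI allI impI)
    fix n assume n: "n \<ge> k M"
    obtain m where m: "m \<ge> M" "k m \<le> n" "n < k (Suc m)" using bracket[OF n unb] by blast
    have npos: "0 < real n" using kpos[of m] m(2) by linarith
    have km: "m \<ge> M1" "m \<ge> M2" "Suc m \<ge> M1" using m(1) unfolding M_def by auto
    have "T n / real n \<le> T (k (Suc m)) / real (k m)"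
      using Tmono[of n "k (Suc m)"] m npos kpos[of m] nn[of "k (Suc m)"]
      by (intro frac_le) auto
    also have "\<dots> = (T (k (Suc m)) / real (k (Suc m))) * (real (k (Suc m)) / real (k m))"
      using kpos[of "Suc m"] by simp
    also have "\<dots> \<le> (\<mu> + \<eta>) * (1 + \<eta>)"
    proof (intro mult_mono)
      show "T (k (Suc m)) / real (k (Suc m)) \<le> \<mu> + \<eta>" using M1[OF km(3)] by linarith
      show "real (k (Suc m)) / real (k m) \<le> 1 + \<eta>"
      proof -
        have "a^2 * real (k m) \<le> (1 + \<eta>) * real (k m)" using a2 kpos[of m] by (intro mult_right_mono) auto
        hence "real (k (Suc m)) \<le> (1 + \<eta>) * real (k m)" using ratio[OF km(2)] by linarith
        thus ?thesis using kpos[of m] by (simp add: divide_le_eq)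
      qed
    qed (use \<mu>0 \<eta>0 kpos nn in \<open>auto intro: divide_nonneg_nonneg\<close>)
    also have "\<dots> < \<mu> + \<epsilon>"
    proof -
      have "(\<mu> + \<eta>) * (1 + \<eta>) = \<mu> + \<eta> * (\<mu> + 1 + \<eta>)" by (simp add: algebra_simps)
      also have "\<eta> * (\<mu> + 1 + \<eta>) < \<eta> * (\<mu> + 3)" using \<eta>0 \<eta>2 by (intro mult_strict_left_mono) auto
      finally show ?thesis using \<eta>1 by linarith
    qed
    finally have up: "T n / real n < \<mu> + \<epsilon>" .
    have low: "\<mu> - \<epsilon> < T n / real n"
    proof (cases "\<mu> - \<eta> < 0")
      case True
      have "0 \<le> T n / real n" using nn npos by simp
      thus ?thesis using True \<eta>\<epsilon> by linarith
    next
      case False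
      have r: "real (k m) / real (k (Suc m)) \<ge> 1 / (1 + \<eta>)"
      proof -
        have "real (k (Suc m)) \<le> (1 + \<eta>) * real (k m)"
        proof -
          have "a^2 * real (k m) \<le> (1 + \<eta>) * real (k m)" using a2 kpos[of m] by (intro mult_right_mono) auto
          thus ?thesis using ratio[OF km(2)] by linarith
        qed
        thus ?thesis using kpos[of m] kpos[of "Suc m"] \<eta>0 by (simp add: field_simps)
      qed
      have "(\<mu> - \<eta>) * (1 / (1 + \<eta>)) \<le> (T (k m) / real (k m)) * (real (k m) / real (k (Suc m)))"
        using M1[OF km(1)] False r \<eta>0 by (intro mult_mono) (auto simp: abs_less_iff)
      also have "\<dots> = T (k m) / real (k (Suc m))" using kpos[of m] by simp
      also have "\<dots> \<le> T n / real n"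
        using Tmono[of "k m" n] m npos kpos[of "Suc m"] nn[of "k m"]
        by (intro frac_le) auto
      finally have A: "(\<mu> - \<eta>) * (1 / (1 + \<eta>)) \<le> T n / real n" .
      have "(\<mu> - \<eta>) * (1 - \<eta>) \<le> (\<mu> - \<eta>) * (1 / (1 + \<eta>))"
        using False \<eta>0 by (intro mult_left_mono) (auto simp: field_simps)
      moreover have "\<mu> - \<epsilon> < (\<mu> - \<eta>) * (1 - \<eta>)"
      proof -
        have "(\<mu> - \<eta>) * (1 - \<eta>) = \<mu> - \<eta> * (\<mu> + 1 - \<eta>)" by (simp add: algebra_simps)
        moreover have "\<eta> * (\<mu> + 1 - \<eta>) < \<eta> * (\<mu> + 3)" using \<eta>0 by (intro mult_strict_left_mono) auto
        ultimately show ?thesis using \<eta>1 by linarith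
      qed
      ultimately show ?thesis using A by linarith
    qed
    show "norm (T n / real n - \<mu>) < \<epsilon>" using up low by (simp add: abs_less_iff)
  qed
qed

lemma count_le:
  fixes x :: real
  assumes "0 \<le> x"
  shows "(\<Sum>i<n. indicator {real (Suc i)<..} x) \<le> x"
proof -
  have "(\<Sum>i<n. indicator {real (Suc i)<..} x :: real) \<le> min (real n) x" for n
  proof (induction n)
    case 0 then show ?case using assms by simp
  next
    case (Suc n)
    show ?case
    proof (cases "real (Suc n) < x")
      case True
      have "(\<Sum>i<Suc n. indicator {real (Suc i)<..} x :: real) = (\<Sum>i<n. indicator {real (Suc i)<..} x) + 1"
        using True by simp
      also have "\<dots> \<le> min (real n) x + 1" using Suc by simp
      also have "\<dots> \<le> min (real (Suc n)) x" using True by simp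
      finally show ?thesis .
    next
      case False
      have "(\<Sum>i<Suc n. indicator {real (Suc i)<..} x :: real) = (\<Sum>i<n. indicator {real (Suc i)<..} x)"
        using False by simp
      also have "\<dots> \<le> min (real n) x" using Suc by simp
      also have "\<dots> \<le> min (real (Suc n)) x" by simp
      finally show ?thesis .
    qed
  qed
  thus ?thesis by (meson min.boundedE)
qed

lemma cesaro_eventually_eq:
  fixes a b :: "nat \<Rightarrow> real"
  assumes ev: "eventually (\<lambda>n. a n = b n) sequentially"
    and lim: "(\<lambda>n. (\<Sum>i<n. b i) / real n) \<longlonglongrightarrow> L"
  shows "(\<lambda>n. (\<Sum>i<n. a i) / real n) \<longlonglongrightarrow> L"
proof -
  obtain n0 where n0: "\<And>n. n \<ge> n0 \<Longrightarrow> a n = b n" using ev by (auto simp: eventually_sequentially)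
  define C where "C = (\<Sum>i<n0. a i - b i)"
  have eq: "(\<Sum>i<n. a i) = (\<Sum>i<n. b i) + C" if "n \<ge> n0" for n
  proof -
    have "(\<Sum>i<n. a i - b i) = C + (\<Sum>i\<in>{n0..<n}. a i - b i)"
      unfolding C_def using that by (metis atLeast0LessThan sum.atLeastLessThan_concat zero_le)
    also have "(\<Sum>i\<in>{n0..<n}. a i - b i) = 0" using n0 by (intro sum.neutral) auto
    finally show ?thesis by (simp add: sum_subtractf)
  qed
  have "(\<lambda>n. (\<Sum>i<n. b i) / real n + C / real n) \<longlonglongrightarrow> L + 0"
    by (intro tendsto_add lim lim_const_over_n)
  moreover have "eventually (\<lambda>n. (\<Sum>i<n. b i) / real n + C / real n = (\<Sum>i<n. a i) / real n) sequentially"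
    using eventually_ge_at_top[of n0] by eventually_elim (simp add: eq add_divide_distrib)
  ultimately show ?thesis by (simp add: tendsto_cong)
qed

context prob_space
begin

lemma slln_nonneg:
  fixes X :: "nat \<Rightarrow> 'a \<Rightarrow> real"
  assumes rv[measurable]: "\<And>i. random_variable borel (X i)"
    and indep: "\<And>i j. i \<noteq> j \<Longrightarrow> indep_var borel (X i) borel (X j)"
    and ident: "\<And>i. distr M borel (X i) = distr M borel (X 0)"
    and int: "integrable M (X 0)"
    and nn: "\<And>i x. x \<in> space M \<Longrightarrow> 0 \<le> X i x"
  shows "AE x in M. (\<lambda>n. (\<Sum>i<n. X i x) / real n) \<longlonglongrightarrow> expectation (X 0)"
proof -
  define \<mu> where "\<mu> = expectation (X 0)"
  have ident_int: "(\<integral>x. g (X i x) \<partial>M) = (\<integral>x. g (X 0 x) \<partial>M)"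
    if g[measurable]: "g \<in> borel_measurable borel" for g :: "real \<Rightarrow> real" and i
  proof -
    have "(\<integral>x. g (X i x) \<partial>M) = integral\<^sup>L (distr M borel (X i)) g" by (rule integral_distr[symmetric]) auto
    also have "\<dots> = integral\<^sup>L (distr M borel (X 0)) g" by (simp only: ident[of i])
    also have "\<dots> = (\<integral>x. g (X 0 x) \<partial>M)" by (rule integral_distr) auto
    finally show ?thesis .
  qed
  have bnd_int: "integrable M f" if "f \<in> borel_measurable M" "\<And>x. x \<in> space M \<Longrightarrow> \<bar>f x\<bar> \<le> B"
    for f :: "'a \<Rightarrow> real" and B
    using that by (intro integrable_const_bound[of _ B]) auto
  have nn0: "AE x in M. 0 \<le> X 0 x" using nn by auto

  define gt where "gt i y = (if y \<le> real (Suc i) then y else 0)" for i and y :: real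
  have gt_meas[measurable]: "gt i \<in> borel_measurable borel" for i unfolding gt_def by measurable
  define Y where "Y i x = gt i (X i x)" for i x
  have Y_meas[measurable]: "random_variable borel (Y i)" for i unfolding Y_def by measurable
  have Y_nn: "0 \<le> Y i x" if "x \<in> space M" for i x using nn[OF that] unfolding Y_def gt_def by auto
  have Y_le: "Y i x \<le> real (Suc i)" if "x \<in> space M" for i x unfolding Y_def gt_def by auto
  have Y_int: "integrable M (Y i)" for i
    by (rule bnd_int[of _ "real (Suc i)"]) (use Y_nn Y_le in auto)

  define A where "A i = {x \<in> space M. real (Suc i) < X i x}" for i
  have A_sets[measurable]: "A i \<in> sets M" for i unfolding A_def by measurable
  have measA: "measure M (A i) = (\<integral>x. indicator {real (Suc i)<..} (X 0 x) \<partial>M)" for i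
  proof -
    have "measure M (A i) = (\<integral>x. indicator (A i) x \<partial>M)" by simp
    also have "\<dots> = (\<integral>x. indicator {real (Suc i)<..} (X i x) \<partial>M)"
      by (intro Bochner_Integration.integral_cong) (auto simp: A_def indicator_def)
    also have "\<dots> = (\<integral>x. indicator {real (Suc i)<..} (X 0 x) \<partial>M)"
      by (rule ident_int) measurable
    finally show ?thesis .
  qed
  have ind_int: "integrable M (\<lambda>x. indicator {real (Suc i)<..} (X 0 x) :: real)" for i
    by (rule bnd_int[of _ 1]) (auto simp: indicator_def)
  have sumA: "summable (\<lambda>i. measure M (A i))"
  proof (rule summableI_nonneg_bounded)
    fix n
    have "(\<Sum>i<n. measure M (A i)) = (\<integral>x. (\<Sum>i<n. indicator {real (Suc i)<..} (X 0 x)) \<partial>M)"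
      unfolding measA by (rule Bochner_Integration.integral_sum[symmetric]) (rule ind_int)
    also have "\<dots> \<le> (\<integral>x. X 0 x \<partial>M)"
    proof (rule integral_mono_AE)
      show "AE x in M. (\<Sum>i<n. indicator {real (Suc i)<..} (X 0 x)) \<le> X 0 x"
        using nn0 by eventually_elim (rule count_le)
    qed (use int ind_int in auto)
    finally show "(\<Sum>i<n. measure M (A i)) \<le> \<mu>" unfolding \<mu>_def .
  qed simp
  have evXY: "AE x in M. eventually (\<lambda>n. X n x = Y n x) sequentially"
  proof -
    have "AE x in M. eventually (\<lambda>n. x \<in> space M - A n) sequentially"
      by (rule borel_cantelli_AE1) (auto simp: less_top[symmetric] sumA)
    then show ?thesis
      by (rule AE_mp) (auto simp: A_def Y_def gt_def elim!: eventually_mono intro!: AE_I2)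
  qed

  define EY where "EY i = expectation (Y i)" for i
  have EY_eq: "EY i = (\<integral>x. gt i (X 0 x) \<partial>M)" for i
    unfolding EY_def Y_def by (rule ident_int) measurable
  have EY_lim: "EY \<longlonglongrightarrow> \<mu>"
  proof -
    have "(\<lambda>i. \<integral>x. gt i (X 0 x) \<partial>M) \<longlonglongrightarrow> (\<integral>x. X 0 x \<partial>M)"
    proof (rule integral_dominated_convergence[where w="\<lambda>x. \<bar>X 0 x\<bar>"])
      show "integrable M (\<lambda>x. \<bar>X 0 x\<bar>)" using int by auto
      show "AE x in M. (\<lambda>i. gt i (X 0 x)) \<longlonglongrightarrow> X 0 x"
      proof (rule AE_I2, rule tendsto_eventually)
        fix x
        obtain n :: nat where "X 0 x \<le> real n" using real_arch_simple by blast
        then show "eventually (\<lambda>i. gt i (X 0 x) = X 0 x) sequentially"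
          unfolding eventually_sequentially gt_def by (intro exI[of _ n]) auto
      qed
      show "AE x in M. norm (gt i (X 0 x)) \<le> \<bar>X 0 x\<bar>" for i by (auto simp: gt_def)
    qed auto
    then show ?thesis unfolding \<mu>_def EY_eq[abs_def] .
  qed
  define ET where "ET n = (\<Sum>i<n. EY i)" for n
  have ET_lim: "(\<lambda>n. ET n / real n) \<longlonglongrightarrow> \<mu>" unfolding ET_def by (rule cesaro[OF EY_lim])

  define T where "T n x = (\<Sum>i<n. Y i x)" for n x
  have T_meas[measurable]: "random_variable borel (T n)" for n unfolding T_def by measurable
  define G where "G n = (\<integral>x. (if X 0 x \<le> real n then (X 0 x)^2 else 0) \<partial>M)" for n
  define Z where "Z i x = Y i x - EY i" for i x
  have Z_meas[measurable]: "random_variable borel (Z i)" for i unfolding Z_def by measurable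
  have Z_int: "integrable M (Z i)" for i unfolding Z_def using Y_int by auto
  have Z_int2: "integrable M (\<lambda>x. Z i x * Z j x)" for i j
  proof (rule bnd_int[of _ "(real (Suc i) + \<bar>EY i\<bar>) * (real (Suc j) + \<bar>EY j\<bar>)"])
    fix x assume x: "x \<in> space M"
    have zb: "\<bar>Z t x\<bar> \<le> real (Suc t) + \<bar>EY t\<bar>" for t
    proof -
      have "0 \<le> Y t x" "Y t x \<le> real (Suc t)" using Y_nn[OF x, of t] Y_le[OF x, of t] by auto
      moreover have "EY t \<le> \<bar>EY t\<bar>" "- EY t \<le> \<bar>EY t\<bar>" by auto
      ultimately show ?thesis unfolding Z_def abs_le_iff by linarith
    qed
    have "\<bar>Z i x\<bar> \<le> real (Suc i) + \<bar>EY i\<bar>" "\<bar>Z j x\<bar> \<le> real (Suc j) + \<bar>EY j\<bar>"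
      using zb by auto
    then show "\<bar>Z i x * Z j x\<bar> \<le> (real (Suc i) + \<bar>EY i\<bar>) * (real (Suc j) + \<bar>EY j\<bar>)"
      unfolding abs_mult by (intro mult_mono) auto
  qed measurable
  have Z_mean: "expectation (Z i) = 0" for i
    unfolding Z_def EY_def using Y_int by (simp add: prob_space)
  have Z_cross: "expectation (\<lambda>x. Z i x * Z j x) = 0" if "i \<noteq> j" for i j
  proof -
    have "indep_var borel ((\<lambda>y. gt i y - EY i) \<circ> X i) borel ((\<lambda>y. gt j y - EY j) \<circ> X j)"
      by (rule indep_var_compose[OF indep[OF that]]) measurable
    then have iv: "indep_var borel (Z i) borel (Z j)"
    proof -
      have "Z t = (\<lambda>x. gt t (X t x) - EY t)" for t by (auto simp: Z_def Y_def fun_eq_iff)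
      thus ?thesis using \<open>indep_var borel _ borel _\<close> by (simp add: comp_def)
    qed
    have "expectation (\<lambda>x. Z i x * Z j x) = expectation (Z i) * expectation (Z j)"
      by (rule indep_var_lebesgue_integral[OF iv Z_int Z_int])
    then show ?thesis by (simp add: Z_mean)
  qed
  have Z_sq: "expectation (\<lambda>x. (Z i x)^2) \<le> G n" if "i < n" for i n
  proof -
    have Y2_int: "integrable M (\<lambda>x. (Y i x)^2)"
      using Z_int2[of i i] Y_int
      by (intro bnd_int[of _ "real (Suc i)^2"]) (use Y_nn Y_le in \<open>auto intro!: power_mono\<close>)
    have "expectation (\<lambda>x. (Z i x)^2) = variance (Y i)" unfolding Z_def EY_def by simp
    also have "\<dots> = expectation (\<lambda>x. (Y i x)^2) - (expectation (Y i))^2"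
      by (rule variance_eq[OF Y_int Y2_int])
    also have "\<dots> \<le> expectation (\<lambda>x. (Y i x)^2)" by simp
    also have "\<dots> = (\<integral>x. (gt i (X 0 x))^2 \<partial>M)"
      unfolding Y_def by (rule ident_int[of "\<lambda>y. (gt i y)^2"]) measurable
    also have "\<dots> \<le> G n" unfolding G_def
    proof (rule Bochner_Integration.integral_mono)
      show "integrable M (\<lambda>x. (gt i (X 0 x))^2)"
        by (rule bnd_int[of _ "real (Suc i)^2"]) (use nn in \<open>auto simp: gt_def intro!: power_mono\<close>)
      show "integrable M (\<lambda>x. if X 0 x \<le> real n then (X 0 x)^2 else 0)"
        by (rule bnd_int[of _ "real n^2"]) (use nn in \<open>auto intro!: power_mono\<close>)
      fix x assume "x \<in> space M"
      then show "(gt i (X 0 x))^2 \<le> (if X 0 x \<le> real n then (X 0 x)^2 else 0)"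
        using that nn[of x 0] by (auto simp: gt_def)
    qed
    finally show ?thesis .
  qed
  have var_bound: "(\<integral>x. (T n x - ET n)^2 \<partial>M) \<le> real n * G n" for n
  proof -
    have eqZ: "T n x - ET n = (\<Sum>i<n. Z i x)" for x
      unfolding T_def ET_def Z_def by (simp add: sum_subtractf)
    have "(\<integral>x. (T n x - ET n)^2 \<partial>M) = (\<integral>x. (\<Sum>i<n. \<Sum>j<n. Z i x * Z j x) \<partial>M)"
      unfolding eqZ power2_eq_square sum_product ..
    also have "\<dots> = (\<Sum>i<n. \<Sum>j<n. expectation (\<lambda>x. Z i x * Z j x))"
      by (simp add: Bochner_Integration.integral_sum Z_int2 Bochner_Integration.integrable_sum)
    also have "\<dots> = (\<Sum>i<n. expectation (\<lambda>x. (Z i x)^2))"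
    proof (intro sum.cong refl)
      fix i assume i: "i \<in> {..<n}"
      have "(\<Sum>j<n. expectation (\<lambda>x. Z i x * Z j x)) = (\<Sum>j\<in>{i}. expectation (\<lambda>x. Z i x * Z j x))"
        using i Z_cross by (intro sum.mono_neutral_right) auto
      then show "(\<Sum>j<n. expectation (\<lambda>x. Z i x * Z j x)) = expectation (\<lambda>x. (Z i x)^2)"
        by (simp add: power2_eq_square)
    qed
    also have "\<dots> \<le> (\<Sum>i<n. G n)" by (intro sum_mono Z_sq) auto
    also have "\<dots> = real n * G n" by simp
    finally show ?thesis .
  qed

  have ET_exp: "expectation (T n) = ET n" for n
    unfolding T_def ET_def EY_def by (simp add: Bochner_Integration.integral_sum Y_int)
  have T_nn: "0 \<le> T n x" if "x \<in> space M" for n x unfolding T_def using Y_nn[OF that] by (simp add: sum_nonneg)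
  have T_le: "T n x \<le> (\<Sum>i<n. real (Suc i))" if "x \<in> space M" for n x
    unfolding T_def using Y_le[OF that] by (intro sum_mono) auto
  have T_int2: "integrable M (\<lambda>x. (T n x)^2)" for n
  proof (rule bnd_int[of _ "(\<Sum>i<n. real (Suc i))^2"])
    fix x assume x: "x \<in> space M"
    show "\<bar>(T n x)^2\<bar> \<le> (\<Sum>i<n. real (Suc i))^2"
      using T_nn[OF x, of n] T_le[OF x, of n] by (simp add: power_mono)
  qed measurable
  have G_nn: "0 \<le> G n" for n unfolding G_def by (intro integral_nonneg_AE) auto
  have cheb: "prob {x\<in>space M. a \<le> \<bar>T n x - ET n\<bar>} \<le> real n * G n / a^2" if a: "0 < a" for a n
  proof -
    have "prob {x\<in>space M. a \<le> \<bar>T n x - expectation (T n)\<bar>} \<le> variance (T n) / a^2"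
      by (rule Chebyshev_inequality[OF T_meas T_int2 a])
    also have "variance (T n) = (\<integral>x. (T n x - ET n)^2 \<partial>M)" by (simp add: ET_exp)
    finally have "prob {x\<in>space M. a \<le> \<bar>T n x - ET n\<bar>} \<le> (\<integral>x. (T n x - ET n)^2 \<partial>M) / a^2"
      by (simp add: ET_exp)
    also have "\<dots> \<le> real n * G n / a^2" using var_bound[of n] a by (intro divide_right_mono) auto
    finally show ?thesis .
  qed

  have subseq_AE: "AE x in M. eventually (\<lambda>m. \<bar>T (nat \<lfloor>\<alpha>^m\<rfloor>) x - ET (nat \<lfloor>\<alpha>^m\<rfloor>)\<bar> < \<epsilon> * real (nat \<lfloor>\<alpha>^m\<rfloor>)) sequentially"
    if \<alpha>: "1 < \<alpha>" and \<epsilon>: "0 < \<epsilon>" for \<alpha> \<epsilon> :: real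
  proof -
    define k where "k m = nat \<lfloor>\<alpha>^m\<rfloor>" for m
    have kpos: "0 < real (k m)" for m using kf_bounds(3)[of \<alpha> m] \<alpha> unfolding k_def by simp
    define B where "B m = {x\<in>space M. \<epsilon> * real (k m) \<le> \<bar>T (k m) x - ET (k m)\<bar>}" for m
    have B_sets[measurable]: "B m \<in> sets M" for m unfolding B_def by measurable
    have measB: "measure M (B m) \<le> (1 / \<epsilon>^2) * (G (k m) / real (k m))" for m
    proof -
      have "measure M (B m) \<le> real (k m) * G (k m) / (\<epsilon> * real (k m))^2"
        unfolding B_def by (rule cheb) (use \<epsilon> kpos in auto)
      also have "\<dots> = (1 / \<epsilon>^2) * (G (k m) / real (k m))"
        using kpos[of m] \<epsilon> by (simp add: power2_eq_square field_simps)
      finally show ?thesis .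
    qed
    define C where "C = 2 * \<alpha> / (\<alpha> - 1)"
    have Gk_int: "integrable M (\<lambda>x. (if X 0 x \<le> real (k m) then (X 0 x)^2 else 0) / real (k m))" for m
      by (rule bnd_int[of _ "real (k m)^2 / real (k m)"])
         (use nn kpos in \<open>auto intro!: divide_right_mono power_mono\<close>)
    have sumG: "summable (\<lambda>m. G (k m) / real (k m))"
    proof (rule summableI_nonneg_bounded)
      fix n
      have "(\<Sum>m<n. G (k m) / real (k m))
          = (\<integral>x. (\<Sum>m<n. (if X 0 x \<le> real (k m) then (X 0 x)^2 else 0) / real (k m)) \<partial>M)"
        unfolding G_def by (simp add: Bochner_Integration.integral_sum Gk_int)
      also have "\<dots> \<le> (\<integral>x. C * X 0 x \<partial>M)"
      proof (rule integral_mono_AE)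
        show "AE x in M. (\<Sum>m<n. (if X 0 x \<le> real (k m) then (X 0 x)^2 else 0) / real (k m)) \<le> C * X 0 x"
          using nn0
        proof eventually_elim
          case (elim x)
          have "(\<Sum>m<n. (if X 0 x \<le> real (k m) then (X 0 x)^2 else 0) / real (k m))
              = (\<Sum>m<n. (if X 0 x \<le> real (nat \<lfloor>\<alpha>^m\<rfloor>) then (X 0 x)^2 / real (nat \<lfloor>\<alpha>^m\<rfloor>) else 0))"
            unfolding k_def by (intro sum.cong) auto
          also have "\<dots> \<le> C * X 0 x" unfolding C_def by (rule trunc_sum_bound[OF \<alpha> elim])
          finally show ?case .
        qed
      qed (use int Gk_int in auto)
      also have "\<dots> = C * \<mu>" unfolding \<mu>_def by simp
      finally show "(\<Sum>m<n. G (k m) / real (k m)) \<le> C * \<mu>" .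
    qed (use G_nn kpos in \<open>auto intro: divide_nonneg_pos\<close>)
    have sumB: "summable (\<lambda>m. measure M (B m))"
      by (rule summable_comparison_test[OF _ summable_mult[OF sumG, of "1 / \<epsilon>^2"]])
         (use measB in auto)
    have "AE x in M. eventually (\<lambda>m. x \<in> space M - B m) sequentially"
      by (rule borel_cantelli_AE1) (auto simp: less_top[symmetric] sumB)
    then show ?thesis
      by (rule AE_mp) (auto simp: B_def k_def not_le elim!: eventually_mono intro!: AE_I2)
  qed
  define kk where "kk j m = nat \<lfloor>(1 + 1 / real (Suc j))^m\<rfloor>" for j m
  have kk_pos: "0 < real (kk j m)" for j m using kf_bounds(3)[of "1 + 1 / real (Suc j)" m] unfolding kk_def by simp
  have kk_inf: "filterlim (kk j) at_top sequentially" for j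
    unfolding filterlim_at_top
  proof
    fix z :: nat
    have a1: "1 < 1 + 1 / real (Suc j)" by simp
    obtain m0 where m0: "\<forall>m\<ge>m0. real z + 1 \<le> (1 + 1 / real (Suc j))^m" using pow_ev_ge[OF a1] by blast
    show "eventually (\<lambda>m. z \<le> kk j m) sequentially"
      unfolding eventually_sequentially
    proof (intro exI allI impI)
      fix m assume "m0 \<le> m"
      hence "real z + 1 \<le> (1 + 1 / real (Suc j))^m" using m0 by blast
      moreover have "(1 + 1 / real (Suc j))^m - 1 < real (kk j m)"
        unfolding kk_def by (rule kf_bounds(2)) (use a1 in simp)
      ultimately show "z \<le> kk j m" by linarith
    qed
  qed
  have allAE: "AE x in M. \<forall>j e. eventually (\<lambda>m. \<bar>T (kk j m) x - ET (kk j m)\<bar> < (1 / real (Suc e)) * real (kk j m)) sequentially"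
    unfolding AE_all_countable kk_def by (intro allI subseq_AE) auto

  show ?thesis
    using allAE evXY AE_space
  proof eventually_elim
    case (elim x)
    have sub: "(\<lambda>m. T (kk j m) x / real (kk j m)) \<longlonglongrightarrow> \<mu>" for j
    proof -
      have d0: "(\<lambda>m. (T (kk j m) x - ET (kk j m)) / real (kk j m)) \<longlonglongrightarrow> 0"
      proof (rule LIMSEQ_I)
        fix r :: real assume r: "0 < r"
        obtain e :: nat where e: "1 / real (Suc e) < r"
          using reals_Archimedean r by (metis of_nat_Suc inverse_eq_divide)
        obtain m0 where m0: "\<And>m. m \<ge> m0 \<Longrightarrow> \<bar>T (kk j m) x - ET (kk j m)\<bar> < (1 / real (Suc e)) * real (kk j m)"
        proof -
          have "eventually (\<lambda>m. \<bar>T (kk j m) x - ET (kk j m)\<bar> < (1 / real (Suc e)) * real (kk j m)) sequentially"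
            using elim(1) by blast
          then show ?thesis using that unfolding eventually_sequentially by blast
        qed
        show "\<exists>no. \<forall>m\<ge>no. norm ((T (kk j m) x - ET (kk j m)) / real (kk j m) - 0) < r"
        proof (intro exI allI impI)
          fix m assume "m \<ge> m0"
          then have "\<bar>T (kk j m) x - ET (kk j m)\<bar> / real (kk j m) < 1 / real (Suc e)"
            using m0 kk_pos[of j m] by (simp add: divide_less_eq)
          then show "norm ((T (kk j m) x - ET (kk j m)) / real (kk j m) - 0) < r"
            using e kk_pos[of j m] by simp
        qed
      qed
      have d1: "(\<lambda>m. ET (kk j m) / real (kk j m)) \<longlonglongrightarrow> \<mu>"
        using filterlim_compose[OF ET_lim kk_inf[of j]] by simp
      have "(\<lambda>m. (T (kk j m) x - ET (kk j m)) / real (kk j m) + ET (kk j m) / real (kk j m)) \<longlonglongrightarrow> 0 + \<mu>"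
        by (intro tendsto_add d0 d1)
      then show ?thesis by (simp add: diff_divide_distrib)
    qed
    have Tlim: "(\<lambda>n. T n x / real n) \<longlonglongrightarrow> \<mu>"
    proof (rule sandwich)
      show "T n x \<le> T (Suc n) x" for n unfolding T_def using Y_nn[OF elim(3)] by simp
      show "0 \<le> T n x" for n using T_nn[OF elim(3)] .
      show "(\<lambda>m. T (nat \<lfloor>(1 + 1 / real (Suc j))^m\<rfloor>) x / real (nat \<lfloor>(1 + 1 / real (Suc j))^m\<rfloor>)) \<longlonglongrightarrow> \<mu>" for j
        using sub[of j] unfolding kk_def .
    qed
    show ?case unfolding \<mu>_def[symmetric]
      by (rule cesaro_eventually_eq[OF elim(2)]) (use Tlim in \<open>simp add: T_def\<close>)
  qed
qed

lemma slln:
  fixes X :: "nat \<Rightarrow> 'a \<Rightarrow> real"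
  assumes rv[measurable]: "\<And>i. random_variable borel (X i)"
    and indep: "\<And>i j. i \<noteq> j \<Longrightarrow> indep_var borel (X i) borel (X j)"
    and ident: "\<And>i. distr M borel (X i) = distr M borel (X 0)"
    and int: "integrable M (X 0)"
  shows "AE x in M. (\<lambda>n. (\<Sum>i<n. X i x) / real n) \<longlonglongrightarrow> expectation (X 0)"
proof -
  have part: "AE x in M. (\<lambda>n. (\<Sum>i<n. f (X i x)) / real n) \<longlonglongrightarrow> expectation (\<lambda>x. f (X 0 x))"
    if f[measurable]: "f \<in> borel_measurable borel" and fnn: "\<And>y. 0 \<le> f y"
      and fint: "integrable M (\<lambda>x. f (X 0 x))" for f :: "real \<Rightarrow> real"
  proof (rule slln_nonneg[where X="\<lambda>i x. f (X i x)"])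
    show "indep_var borel (\<lambda>x. f (X i x)) borel (\<lambda>x. f (X j x))" if "i \<noteq> j" for i j
      using indep_var_compose[OF indep[OF that] f f] by (simp add: comp_def)
    show "distr M borel (\<lambda>x. f (X i x)) = distr M borel (\<lambda>x. f (X 0 x))" for i
    proof -
      have "distr M borel (\<lambda>x. f (X i x)) = distr (distr M borel (X i)) borel f"
        by (subst distr_distr) (auto simp: comp_def)
      also have "\<dots> = distr (distr M borel (X 0)) borel f" by (simp only: ident[of i])
      also have "\<dots> = distr M borel (\<lambda>x. f (X 0 x))"
        by (subst distr_distr) (auto simp: comp_def)
      finally show ?thesis .
    qed
  qed (use fint fnn in auto)
  have p: "AE x in M. (\<lambda>n. (\<Sum>i<n. max (X i x) 0) / real n) \<longlonglongrightarrow> expectation (\<lambda>x. max (X 0 x) 0)"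
    by (rule part) (use int in auto)
  have m: "AE x in M. (\<lambda>n. (\<Sum>i<n. max (- X i x) 0) / real n) \<longlonglongrightarrow> expectation (\<lambda>x. max (- X 0 x) 0)"
    by (rule part[of "\<lambda>y. max (- y) 0"]) (use int in auto)
  have E: "expectation (X 0) = expectation (\<lambda>x. max (X 0 x) 0) - expectation (\<lambda>x. max (- X 0 x) 0)"
  proof -
    have "expectation (X 0) = expectation (\<lambda>x. max (X 0 x) 0 - max (- X 0 x) 0)"
      by (intro Bochner_Integration.integral_cong) auto
    also have "\<dots> = expectation (\<lambda>x. max (X 0 x) 0) - expectation (\<lambda>x. max (- X 0 x) 0)"
      by (rule Bochner_Integration.integral_diff) (use int in auto)
    finally show ?thesis .
  qed
  show ?thesis
    using p m
  proof eventually_elim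
    case (elim x)
    have "(\<lambda>n. (\<Sum>i<n. max (X i x) 0) / real n - (\<Sum>i<n. max (- X i x) 0) / real n) \<longlonglongrightarrow>
          expectation (\<lambda>x. max (X 0 x) 0) - expectation (\<lambda>x. max (- X 0 x) 0)"
      by (intro tendsto_diff elim)
    moreover have "(\<Sum>i<n. max (X i x) 0) / real n - (\<Sum>i<n. max (- X i x) 0) / real n = (\<Sum>i<n. X i x) / real n" for n
    proof -
      have "(\<Sum>i<n. max (X i x) 0) - (\<Sum>i<n. max (- X i x) 0) = (\<Sum>i<n. X i x)"
        by (simp add: sum_subtractf[symmetric]) (intro sum.cong, auto)
      then show ?thesis by (simp add: diff_divide_distrib[symmetric])
    qed
    ultimately show ?case unfolding E by simp
  qed
qed

end

primrec mp :: "(nat \<Rightarrow> nat \<Rightarrow> real) \<Rightarrow> nat set \<Rightarrow> nat \<Rightarrow> nat \<Rightarrow> nat \<Rightarrow> real" where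
  "mp A C 0 l k = (if l = k then 1 else 0)"
| "mp A C (Suc t) l k = (\<Sum>j\<in>C. mp A C t l j * A j k)"

lemma mp_nonneg:
  assumes "\<And>l k. l \<in> C \<Longrightarrow> k \<in> C \<Longrightarrow> 0 \<le> A l k" "k \<in> C"
  shows "0 \<le> mp A C t l k"
  using assms(2)
proof (induction t arbitrary: k)
  case (Suc t) then show ?case using assms(1) by (auto intro!: sum_nonneg mult_nonneg_nonneg)
qed simp

lemma mp_colsum_le:
  assumes fin: "finite C" and nn: "\<And>l k. l \<in> C \<Longrightarrow> k \<in> C \<Longrightarrow> 0 \<le> A l k"
    and col: "\<And>k. k \<in> C \<Longrightarrow> (\<Sum>l\<in>C. A l k) \<le> 1" and k: "k \<in> C"
  shows "(\<Sum>l\<in>C. mp A C t l k) \<le> 1"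
  using k
proof (induction t arbitrary: k)
  case 0 then show ?case using fin by (simp add: sum.delta)
next
  case (Suc t)
  have "(\<Sum>l\<in>C. mp A C (Suc t) l k) = (\<Sum>l\<in>C. \<Sum>j\<in>C. mp A C t l j * A j k)" by simp
  also have "\<dots> = (\<Sum>j\<in>C. \<Sum>l\<in>C. mp A C t l j * A j k)" by (rule sum.swap)
  also have "\<dots> = (\<Sum>j\<in>C. (\<Sum>l\<in>C. mp A C t l j) * A j k)" by (simp add: sum_distrib_right)
  also have "\<dots> \<le> (\<Sum>j\<in>C. 1 * A j k)"
    using Suc nn by (intro sum_mono mult_right_mono) auto
  also have "\<dots> \<le> 1" using col[OF Suc.prems] by simp
  finally show ?case .
qed

lemma mp_colsum_eq:
  assumes fin: "finite C"
    and col: "\<And>k. k \<in> C \<Longrightarrow> (\<Sum>l\<in>C. A l k) = 1" and k: "k \<in> C"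
  shows "(\<Sum>l\<in>C. mp A C t l k) = 1"
  using k
proof (induction t arbitrary: k)
  case 0 then show ?case using fin by (simp add: sum.delta)
next
  case (Suc t)
  have "(\<Sum>l\<in>C. mp A C (Suc t) l k) = (\<Sum>l\<in>C. \<Sum>j\<in>C. mp A C t l j * A j k)" by simp
  also have "\<dots> = (\<Sum>j\<in>C. \<Sum>l\<in>C. mp A C t l j * A j k)" by (rule sum.swap)
  also have "\<dots> = (\<Sum>j\<in>C. (\<Sum>l\<in>C. mp A C t l j) * A j k)" by (simp add: sum_distrib_right)
  also have "\<dots> = (\<Sum>j\<in>C. A j k)"
    using Suc by (intro sum.cong) auto
  also have "\<dots> = 1" using col[OF Suc.prems] by simp
  finally show ?case .
qed

lemma unroll:
  fixes x e :: "nat \<Rightarrow> nat \<Rightarrow> real"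
  assumes fin: "finite C" and nn: "\<And>l k. l \<in> C \<Longrightarrow> k \<in> C \<Longrightarrow> 0 \<le> A l k"
    and col: "\<And>k. k \<in> C \<Longrightarrow> (\<Sum>l\<in>C. A l k) \<le> 1"
    and rec: "\<And>i k. k \<in> C \<Longrightarrow> x (Suc i) k = (\<Sum>l\<in>C. A l k * x i l) + e (Suc i) k"
    and k: "k \<in> C"
  shows "\<bar>x (i + t) k - (\<Sum>l\<in>C. mp A C t l k * x i l)\<bar> \<le> (\<Sum>s\<in>{1..t}. \<Sum>l\<in>C. \<bar>e (i + s) l\<bar>)"
  using k
proof (induction t arbitrary: k)
  case 0
  have "(\<Sum>l\<in>C. mp A C 0 l k * x i l) = x i k" 
  proof -
    have "(\<Sum>l\<in>C. mp A C 0 l k * x i l) = (\<Sum>l\<in>C. if l = k then x i l else 0)"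
      by (intro sum.cong) auto
    also have "\<dots> = x i k" using fin 0 by (simp add: sum.delta')
    finally show ?thesis .
  qed
  then show ?case by simp
next
  case (Suc t)
  define R where "R = (\<Sum>s\<in>{1..t}. \<Sum>l\<in>C. \<bar>e (i + s) l\<bar>)"
  define \<rho> where "\<rho> j = x (i + t) j - (\<Sum>l\<in>C. mp A C t l j * x i l)" for j
  have \<rho>b: "\<bar>\<rho> j\<bar> \<le> R" if "j \<in> C" for j using Suc.IH[OF that] unfolding \<rho>_def R_def .
  have R0: "0 \<le> R" unfolding R_def by (intro sum_nonneg) auto
  have "x (i + Suc t) k = (\<Sum>j\<in>C. A j k * x (i + t) j) + e (i + Suc t) k"
    using rec[OF Suc.prems, of "i + t"] by simp
  also have "(\<Sum>j\<in>C. A j k * x (i + t) j) = (\<Sum>j\<in>C. A j k * (\<Sum>l\<in>C. mp A C t l j * x i l)) + (\<Sum>j\<in>C. A j k * \<rho> j)"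
    unfolding \<rho>_def by (subst sum.distrib[symmetric]) (simp add: right_diff_distrib)
  also have "(\<Sum>j\<in>C. A j k * (\<Sum>l\<in>C. mp A C t l j * x i l)) = (\<Sum>l\<in>C. mp A C (Suc t) l k * x i l)"
  proof -
    have "(\<Sum>j\<in>C. A j k * (\<Sum>l\<in>C. mp A C t l j * x i l)) = (\<Sum>j\<in>C. \<Sum>l\<in>C. mp A C t l j * A j k * x i l)"
      by (simp add: sum_distrib_left algebra_simps)
    also have "\<dots> = (\<Sum>l\<in>C. \<Sum>j\<in>C. mp A C t l j * A j k * x i l)" by (rule sum.swap)
    also have "\<dots> = (\<Sum>l\<in>C. mp A C (Suc t) l k * x i l)" by (simp add: sum_distrib_right)
    finally show ?thesis .
  qed
  finally have eq: "x (i + Suc t) k - (\<Sum>l\<in>C. mp A C (Suc t) l k * x i l) = (\<Sum>j\<in>C. A j k * \<rho> j) + e (i + Suc t) k"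
    by simp
  have "\<bar>\<Sum>j\<in>C. A j k * \<rho> j\<bar> \<le> (\<Sum>j\<in>C. A j k * R)"
    by (rule order_trans[OF sum_abs sum_mono]) (use nn Suc.prems \<rho>b in \<open>auto simp: abs_mult intro!: mult_left_mono\<close>)
  also have "\<dots> \<le> R"
  proof -
    have "0 \<le> (\<Sum>j\<in>C. A j k)" using nn Suc.prems by (intro sum_nonneg) auto
    thus ?thesis using col[OF Suc.prems] R0 by (simp add: sum_distrib_right[symmetric] mult_left_le_one_le)
  qed
  finally have A1: "\<bar>\<Sum>j\<in>C. A j k * \<rho> j\<bar> \<le> R" .
  have A2: "\<bar>e (i + Suc t) k\<bar> \<le> (\<Sum>l\<in>C. \<bar>e (i + Suc t) l\<bar>)"
    using fin Suc.prems by (intro member_le_sum) auto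
  have "(\<Sum>s\<in>{1..Suc t}. \<Sum>l\<in>C. \<bar>e (i + s) l\<bar>) = R + (\<Sum>l\<in>C. \<bar>e (i + Suc t) l\<bar>)"
    unfolding R_def by simp
  then show ?case unfolding eq using A1 A2 by (smt (verit) abs_triangle_ineq)
qed

lemma contraction_seq:
  fixes s r :: "nat \<Rightarrow> real"
  assumes m: "0 < m" and \<rho>: "0 \<le> \<rho>" "\<rho> < 1" and s0: "\<And>i. 0 \<le> s i"
    and step: "\<And>i. s (i + m) \<le> \<rho> * s i + r i"
    and r: "(\<lambda>i. r i / real i) \<longlonglongrightarrow> 0"
  shows "(\<lambda>i. s i / real i) \<longlonglongrightarrow> 0"
proof (rule LIMSEQ_I)
  fix \<epsilon> :: real assume \<epsilon>: "0 < \<epsilon>"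
  define \<epsilon>' where "\<epsilon>' = \<epsilon> / 2"
  have \<epsilon>': "0 < \<epsilon>'" using \<epsilon> unfolding \<epsilon>'_def by simp
  obtain I0 where I0: "\<And>i. i \<ge> I0 \<Longrightarrow> norm (r i / real i - 0) < \<epsilon>' * (1 - \<rho>)"
    using LIMSEQ_D[OF r, of "\<epsilon>' * (1 - \<rho>)"] \<epsilon>' \<rho> by auto
  define I1 where "I1 = Suc I0"
  define q where "q i = max 0 (s i - \<epsilon>' * real i)" for i
  have q0: "0 \<le> q i" for i unfolding q_def by simp
  have qstep: "q (i + m) \<le> \<rho> * q i" if "i \<ge> I1" for i
  proof -
    have ipos: "0 < real i" using that unfolding I1_def by simp
    have "\<bar>r i / real i\<bar> < \<epsilon>' * (1 - \<rho>)" using I0[of i] that unfolding I1_def by auto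
    hence "r i / real i < \<epsilon>' * (1 - \<rho>)" by linarith
    hence ri: "r i \<le> \<epsilon>' * (1 - \<rho>) * real i" using ipos by (simp add: divide_less_eq less_imp_le)
    have "s (i + m) - \<epsilon>' * real (i + m) \<le> \<rho> * s i + r i - \<epsilon>' * real i"
    proof -
      have "0 \<le> \<epsilon>' * real m" using \<epsilon>' by simp
      thus ?thesis using step[of i] by (simp add: distrib_left)
    qed
    also have "\<dots> \<le> \<rho> * (s i - \<epsilon>' * real i)" using ri by (simp add: algebra_simps)
    also have "\<dots> \<le> \<rho> * q i" unfolding q_def using \<rho> by (intro mult_left_mono) auto
    finally show ?thesis unfolding q_def using \<rho> q0[of i] by (simp add: q_def)
  qed
  define Q where "Q = Max (q ` {I1..<I1 + m})"
  have Qb: "q i \<le> Q" if "i \<ge> I1" for i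
    using that
  proof (induction i rule: less_induct)
    case (less i)
    show ?case
    proof (cases "i < I1 + m")
      case True
      then show ?thesis unfolding Q_def using less.prems by (intro Max_ge) auto
    next
      case False
      define i' where "i' = i - m"
      have ii: "i = i' + m" "i' \<ge> I1" "i' < i" using False m unfolding i'_def by auto
      have "q i \<le> \<rho> * q i'" using qstep[OF ii(2)] ii(1) by simp
      also have "\<dots> \<le> q i'" using \<rho> q0[of i'] by (simp add: mult_left_le_one_le)
      also have "\<dots> \<le> Q" using less.IH[OF ii(3) ii(2)] .
      finally show ?thesis .
    qed
  qed
  have Q0: "0 \<le> Q" using Qb[of I1] q0[of I1] by simp
  obtain I2 :: nat where I2: "Q / \<epsilon>' < real I2" using reals_Archimedean2 by blast
  show "\<exists>no. \<forall>i\<ge>no. norm (s i / real i - 0) < \<epsilon>"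
  proof (intro exI allI impI)
    fix i assume i: "i \<ge> max I1 (max I2 1)"
    hence ipos: "0 < real i" by simp
    have "s i \<le> \<epsilon>' * real i + q i" unfolding q_def by simp
    also have "\<dots> \<le> \<epsilon>' * real i + Q" using Qb[of i] i by simp
    also have "Q < \<epsilon>' * real i"
    proof -
      have "Q < \<epsilon>' * real I2" using I2 \<epsilon>' by (simp add: divide_less_eq mult.commute)
      also have "\<dots> \<le> \<epsilon>' * real i" using i \<epsilon>' by (intro mult_left_mono) auto
      finally show ?thesis .
    qed
    finally have "s i < 2 * \<epsilon>' * real i" by simp
    hence "s i / real i < \<epsilon>" using ipos unfolding \<epsilon>'_def by (simp add: divide_less_eq)
    then show "norm (s i / real i - 0) < \<epsilon>" using s0[of i] ipos by simp
  qed
qed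

lemma mp_semigroup:
  assumes fin: "finite C" and k: "k \<in> C"
  shows "mp A C (a + b) l k = (\<Sum>j\<in>C. mp A C a l j * mp A C b j k)"
  using k
proof (induction b arbitrary: k)
  case 0
  have "(\<Sum>j\<in>C. mp A C a l j * mp A C 0 j k) = (\<Sum>j\<in>C. if j = k then mp A C a l j else 0)"
    by (intro sum.cong) auto
  also have "\<dots> = mp A C a l k" using fin 0 by (simp add: sum.delta')
  finally show ?case by simp
next
  case (Suc b)
  have "mp A C (a + Suc b) l k = (\<Sum>j'\<in>C. mp A C (a + b) l j' * A j' k)" by simp
  also have "\<dots> = (\<Sum>j'\<in>C. (\<Sum>j\<in>C. mp A C a l j * mp A C b j j') * A j' k)"
    using Suc.IH by (intro sum.cong) auto
  also have "\<dots> = (\<Sum>j'\<in>C. \<Sum>j\<in>C. mp A C a l j * (mp A C b j j' * A j' k))"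
    by (simp add: sum_distrib_right mult.assoc)
  also have "\<dots> = (\<Sum>j\<in>C. \<Sum>j'\<in>C. mp A C a l j * (mp A C b j j' * A j' k))" by (rule sum.swap)
  also have "\<dots> = (\<Sum>j\<in>C. mp A C a l j * mp A C (Suc b) j k)" by (simp add: sum_distrib_left)
  finally show ?case .
qed

lemma sum_ge_member:
  fixes f :: "nat \<Rightarrow> real"
  assumes "finite C" "j \<in> C" "\<And>i. i \<in> C \<Longrightarrow> 0 \<le> f i"
  shows "f j \<le> (\<Sum>i\<in>C. f i)"
  using assms by (intro member_le_sum) auto

lemma mp_pos_path:
  assumes fin: "finite C" and nn: "\<And>l k. l \<in> C \<Longrightarrow> k \<in> C \<Longrightarrow> 0 \<le> A l k"
    and path: "(l, k) \<in> (edges_in A C)\<^sup>*"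
  shows "\<exists>n. 0 < mp A C n l k"
  using path
proof (induction rule: rtrancl_induct)
  case base
  show ?case by (intro exI[of _ 0]) simp
next
  case (step y z)
  then obtain n where n: "0 < mp A C n l y" by blast
  have yz: "y \<in> C" "z \<in> C" "0 < A y z" using step(2) unfolding edges_in_def by auto
  have "mp A C n l y * A y z \<le> (\<Sum>j\<in>C. mp A C n l j * A j z)"
    by (rule sum_ge_member[OF fin yz(1)]) (use nn mp_nonneg[where A=A and C=C] yz in \<open>auto intro!: mult_nonneg_nonneg\<close>)
  moreover have "0 < mp A C n l y * A y z" using n yz by simp
  ultimately show ?case by (intro exI[of _ "Suc n"]) simp
qed

lemma mp_selfloop:
  assumes fin: "finite C" and nn: "\<And>l k. l \<in> C \<Longrightarrow> k \<in> C \<Longrightarrow> 0 \<le> A l k"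
    and l0: "l0 \<in> C" "0 < A l0 l0"
  shows "0 < mp A C t l0 l0"
proof (induction t)
  case (Suc t)
  have "mp A C t l0 l0 * A l0 l0 \<le> (\<Sum>j\<in>C. mp A C t l0 j * A j l0)"
    by (rule sum_ge_member[OF fin l0(1)]) (use nn mp_nonneg[where A=A and C=C] l0 in \<open>auto intro!: mult_nonneg_nonneg\<close>)
  moreover have "0 < mp A C t l0 l0 * A l0 l0" using Suc l0 by simp
  ultimately show ?case by simp
qed simp

lemma primitive:
  assumes fin: "finite C" and nn: "\<And>l k. l \<in> C \<Longrightarrow> k \<in> C \<Longrightarrow> 0 \<le> A l k"
    and conn: "connected_sub A C" and l0: "l0 \<in> C" "0 < A l0 l0"
  shows "\<exists>m>0. \<forall>l\<in>C. \<forall>k\<in>C. 0 < mp A C m l k"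
proof -
  have "\<forall>l\<in>C. \<exists>a. 0 < mp A C a l l0"
    using conn l0 unfolding connected_sub_def by (auto intro: mp_pos_path[where A=A and C=C, OF fin nn])
  then obtain fa where fa: "\<And>l. l \<in> C \<Longrightarrow> 0 < mp A C (fa l) l l0" by metis
  have "\<forall>k\<in>C. \<exists>b. 0 < mp A C b l0 k"
    using conn l0 unfolding connected_sub_def by (auto intro: mp_pos_path[where A=A and C=C, OF fin nn])
  then obtain fb where fb: "\<And>k. k \<in> C \<Longrightarrow> 0 < mp A C (fb k) l0 k" by metis
  define K where "K = Max (fa ` C) + Max (fb ` C) + 1"
  have mpnn: "0 \<le> mp A C t x y" if "y \<in> C" for t x y
    by (rule mp_nonneg[where A=A and C=C]) (use nn that in auto)
  show ?thesis
  proof (intro exI[of _ K] conjI ballI)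
    show "0 < K" unfolding K_def by simp
    fix l k assume l: "l \<in> C" and k: "k \<in> C"
    define t where "t = K - fa l - fb k"
    have "fa l \<le> Max (fa ` C)" "fb k \<le> Max (fb ` C)" using fin l k by auto
    hence Keq: "K = fa l + (t + fb k)" unfolding t_def K_def by simp
    have "mp A C t l0 l0 * mp A C (fb k) l0 k \<le> (\<Sum>j\<in>C. mp A C t l0 j * mp A C (fb k) j k)"
      by (rule sum_ge_member[OF fin l0(1)]) (use mpnn k in \<open>auto intro!: mult_nonneg_nonneg\<close>)
    also have "\<dots> = mp A C (t + fb k) l0 k" by (rule mp_semigroup[OF fin k, symmetric])
    finally have B: "mp A C t l0 l0 * mp A C (fb k) l0 k \<le> mp A C (t + fb k) l0 k" .
    have Bpos: "0 < mp A C (t + fb k) l0 k"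
      using B mp_selfloop[where A=A and C=C, OF fin nn l0, of t] fb[OF k] by (smt (verit) mult_pos_pos)
    have "mp A C (fa l) l l0 * mp A C (t + fb k) l0 k \<le> (\<Sum>j\<in>C. mp A C (fa l) l j * mp A C (t + fb k) j k)"
      by (rule sum_ge_member[OF fin l0(1)]) (use mpnn k in \<open>auto intro!: mult_nonneg_nonneg\<close>)
    also have "\<dots> = mp A C K l k" unfolding Keq by (rule mp_semigroup[OF fin k, symmetric])
    finally show "0 < mp A C K l k" using fa[OF l] Bpos by (smt (verit) mult_pos_pos)
  qed
qed

lemma colsum_Suc:
  "(\<Sum>l\<in>C. mp A C (Suc t) l k) = (\<Sum>j\<in>C. (\<Sum>l\<in>C. mp A C t l j) * A j k)"
proof -
  have "(\<Sum>l\<in>C. mp A C (Suc t) l k) = (\<Sum>l\<in>C. \<Sum>j\<in>C. mp A C t l j * A j k)" by simp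
  also have "\<dots> = (\<Sum>j\<in>C. \<Sum>l\<in>C. mp A C t l j * A j k)" by (rule sum.swap)
  also have "\<dots> = (\<Sum>j\<in>C. (\<Sum>l\<in>C. mp A C t l j) * A j k)" by (simp add: sum_distrib_right)
  finally show ?thesis .
qed

lemma substoch_contract:
  assumes fin: "finite C" and nn: "\<And>l k. l \<in> C \<Longrightarrow> k \<in> C \<Longrightarrow> 0 \<le> A l k"
    and col: "\<And>k. k \<in> C \<Longrightarrow> (\<Sum>l\<in>C. A l k) \<le> 1"
    and reach: "\<And>k. k \<in> C \<Longrightarrow> \<exists>k'\<in>C. (\<Sum>l\<in>C. A l k') < 1 \<and> (k', k) \<in> (edges_in A C)\<^sup>*"
  shows "\<exists>m>0. \<exists>\<rho>. 0 \<le> \<rho> \<and> \<rho> < 1 \<and> (\<forall>k\<in>C. (\<Sum>l\<in>C. mp A C m l k) \<le> \<rho>)"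
proof -
  define cs where "cs t k = (\<Sum>l\<in>C. mp A C t l k)" for t k
  have cs_le1: "cs t k \<le> 1" if "k \<in> C" for t k
    unfolding cs_def by (rule mp_colsum_le[OF fin nn col that])
  have cs_nn: "0 \<le> cs t k" if "k \<in> C" for t k
  proof -
    have "0 \<le> mp A C t x k" for x by (rule mp_nonneg[where A=A and C=C]) (use nn that in auto)
    thus ?thesis unfolding cs_def by (intro sum_nonneg) blast
  qed
  have cs_Suc: "cs (Suc t) k = (\<Sum>j\<in>C. cs t j * A j k)" for t k
    unfolding cs_def by (rule colsum_Suc)
  have cs1: "cs 1 k = (\<Sum>j\<in>C. A j k)" for k
  proof -
    have "cs (Suc 0) k = (\<Sum>j\<in>C. cs 0 j * A j k)" by (rule cs_Suc)
    also have "\<dots> = (\<Sum>j\<in>C. A j k)" by (intro sum.cong) (auto simp: cs_def sum.delta fin)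
    finally show ?thesis by simp
  qed
  have cs_mono: "cs (Suc t) k \<le> cs t k" if "k \<in> C" for t k
    using that
  proof (induction t arbitrary: k)
    case 0
    have "cs 0 k = 1" unfolding cs_def using fin 0 by (simp add: sum.delta)
    moreover have "cs 1 k = (\<Sum>j\<in>C. A j k)"
      by (rule cs1)
    ultimately show ?case using col[OF 0] by simp
  next
    case (Suc t)
    have "cs (Suc (Suc t)) k = (\<Sum>j\<in>C. cs (Suc t) j * A j k)" by (rule cs_Suc)
    also have "\<dots> \<le> (\<Sum>j\<in>C. cs t j * A j k)"
      using Suc.IH nn Suc.prems by (intro sum_mono mult_right_mono) auto
    also have "\<dots> = cs (Suc t) k" by (rule cs_Suc[symmetric])
    finally show ?case .
  qed
  have cs_anti: "cs t' k \<le> cs t k" if "k \<in> C" "t \<le> t'" for t t' k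
    using that(2)
  proof (induction t' rule: dec_induct)
    case (step n) then show ?case using cs_mono[OF that(1), of n] by linarith
  qed simp
  have prp: "\<exists>n. cs n k < 1" if "(k', k) \<in> (edges_in A C)\<^sup>*" "cs n0 k' < 1" for k k' n0
    using that(1)
  proof (induction rule: rtrancl_induct)
    case base then show ?case using that(2) by blast
  next
    case (step y z)
    then obtain n where n: "cs n y < 1" by blast
    have yz: "y \<in> C" "z \<in> C" "0 < A y z" using step(2) unfolding edges_in_def by auto
    have "cs (Suc n) z = (\<Sum>j\<in>C. cs n j * A j z)" by (rule cs_Suc)
    also have "\<dots> = (\<Sum>j\<in>C. A j z) - (\<Sum>j\<in>C. (1 - cs n j) * A j z)"
      by (simp add: sum_subtractf[symmetric] algebra_simps)
    also have "(1 - cs n y) * A y z \<le> (\<Sum>j\<in>C. (1 - cs n j) * A j z)"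
      by (rule sum_ge_member[OF fin yz(1)]) (use cs_le1 nn yz in \<open>auto intro!: mult_nonneg_nonneg\<close>)
    moreover have "0 < (1 - cs n y) * A y z" using n yz by simp
    ultimately have "cs (Suc n) z < (\<Sum>j\<in>C. A j z)" by linarith
    also have "\<dots> \<le> 1" using col yz by simp
    finally show ?case by blast
  qed
  have "\<forall>k\<in>C. \<exists>n. cs n k < 1"
  proof
    fix k assume k: "k \<in> C"
    obtain k' where k': "k' \<in> C" "(\<Sum>l\<in>C. A l k') < 1" "(k', k) \<in> (edges_in A C)\<^sup>*" using reach[OF k] by blast
    have "cs 1 k' = (\<Sum>j\<in>C. A j k')"
      by (rule cs1)
    hence "cs 1 k' < 1" using k' by simp
    then show "\<exists>n. cs n k < 1" using prp[OF k'(3)] by blast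
  qed
  then obtain fn where fn: "\<And>k. k \<in> C \<Longrightarrow> cs (fn k) k < 1" by metis
  define m where "m = Max (fn ` C) + 1"
  have csm: "cs m k < 1" if "k \<in> C" for k
  proof -
    have "fn k \<le> m" unfolding m_def using fin that by (simp add: le_SucI)
    hence "cs m k \<le> cs (fn k) k" using cs_anti[OF that] by blast
    thus ?thesis using fn[OF that] by simp
  qed
  show ?thesis
  proof (cases "C = {}")
    case True then show ?thesis by (intro exI[of _ 1] exI[of _ 0]) auto
  next
    case False
    define \<rho> where "\<rho> = Max ((cs m) ` C)"
    have "\<rho> \<in> (cs m) ` C" unfolding \<rho>_def using fin False by (intro Max_in) auto
    then obtain k0 where "k0 \<in> C" "\<rho> = cs m k0" by blast
    hence r: "0 \<le> \<rho>" "\<rho> < 1" using csm cs_nn by auto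
    have "\<forall>k\<in>C. cs m k \<le> \<rho>" unfolding \<rho>_def using fin by auto
    hence "\<forall>k\<in>C. (\<Sum>l\<in>C. mp A C m l k) \<le> \<rho>" unfolding cs_def .
    moreover have "0 < m" unfolding m_def by simp
    ultimately show ?thesis using r by blast
  qed
qed

lemma div_mul_div_cancel:
  fixes x n m :: real
  assumes "n \<noteq> 0"
  shows "(x / n) * (n / m) = x / m"
  using assms by (simp add: field_simps)

lemma ces_small:
  fixes c :: "nat \<Rightarrow> real"
  assumes lim: "(\<lambda>n. (\<Sum>j<n. c (Suc j)) / real n) \<longlonglongrightarrow> L"
  shows "(\<lambda>i. c i / real i) \<longlonglongrightarrow> 0"
proof -
  define a where "a n = (\<Sum>j<n. c (Suc j)) / real n" for n
  have eq: "c (Suc n) / real (Suc n) = a (Suc n) - a n * (real n / real (Suc n))" for n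
  proof (cases "n = 0")
    case True then show ?thesis by (simp add: a_def)
  next
    case False
    have "a n * (real n / real (Suc n)) = (\<Sum>j<n. c (Suc j)) / real (Suc n)"
      unfolding a_def using False by (intro div_mul_div_cancel) simp
    moreover have "a (Suc n) = ((\<Sum>j<n. c (Suc j)) + c (Suc n)) / real (Suc n)"
      unfolding a_def by simp
    ultimately show ?thesis by (simp add: add_divide_distrib)
  qed
  have "(\<lambda>n. a (Suc n) - a n * (real n / real (Suc n))) \<longlonglongrightarrow> L - L * 1"
    by (intro tendsto_diff tendsto_mult LIMSEQ_Suc LIMSEQ_n_over_Suc_n) (use lim in \<open>simp_all add: a_def\<close>)
  hence "(\<lambda>n. c (Suc n) / real (Suc n)) \<longlonglongrightarrow> 0" unfolding eq by simp
  thus ?thesis using filterlim_sequentially_Suc[of "\<lambda>i. c i / real i"] by simp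
qed

lemma shift_small:
  fixes f :: "nat \<Rightarrow> real"
  assumes "(\<lambda>i. f i / real i) \<longlonglongrightarrow> 0"
  shows "(\<lambda>i. f (i + t) / real i) \<longlonglongrightarrow> 0"
proof -
  have a: "(\<lambda>i. f (i + t) / real (i + t)) \<longlonglongrightarrow> 0"
    using LIMSEQ_ignore_initial_segment[OF assms, of t] by simp
  have b: "(\<lambda>i. 1 + real t / real i) \<longlonglongrightarrow> 1 + 0"
    by (intro tendsto_add tendsto_const lim_const_over_n)
  have "(\<lambda>i. f (i + t) / real (i + t) * (1 + real t / real i)) \<longlonglongrightarrow> 0 * (1 + 0)"
    by (intro tendsto_mult a b)
  moreover have "eventually (\<lambda>i. f (i + t) / real (i + t) * (1 + real t / real i) = f (i + t) / real i) sequentially"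
    using eventually_gt_at_top[of 0]
  proof eventually_elim
    case (elim i)
    have "1 + real t / real i = real (i + t) / real i" using elim by (simp add: field_simps)
    then show ?case using elim by (simp add: div_mul_div_cancel)
  qed
  ultimately show ?thesis by (simp add: tendsto_cong)
qed

lemma sum_tend0:
  fixes f :: "'b \<Rightarrow> nat \<Rightarrow> real"
  assumes "finite I" "\<And>l. l \<in> I \<Longrightarrow> (\<lambda>i. f l i / real i) \<longlonglongrightarrow> 0"
  shows "(\<lambda>i. (\<Sum>l\<in>I. f l i) / real i) \<longlonglongrightarrow> 0"
proof -
  have "(\<lambda>i. \<Sum>l\<in>I. f l i / real i) \<longlonglongrightarrow> (\<Sum>l\<in>I. 0)" by (intro tendsto_sum assms(2))
  then show ?thesis by (simp add: sum_divide_distrib)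
qed

lemma R_small:
  fixes e :: "nat \<Rightarrow> nat \<Rightarrow> real"
  assumes fin: "finite C" and e: "\<And>l. l \<in> C \<Longrightarrow> (\<lambda>i. e i l / real i) \<longlonglongrightarrow> 0"
  shows "(\<lambda>i. (\<Sum>s\<in>{1..m}. \<Sum>l\<in>C. \<bar>e (i + s) l\<bar>) / real i) \<longlonglongrightarrow> 0"
proof -
  have "(\<lambda>i. (\<Sum>s\<in>{1..m}. \<Sum>l\<in>C. \<bar>e (i + s) l\<bar>) / real i) = (\<lambda>i. (\<Sum>p\<in>{1..m} \<times> C. \<bar>e (i + fst p) (snd p)\<bar>) / real i)"
    by (simp add: sum.cartesian_product split_def)
  also have "\<dots> \<longlonglongrightarrow> 0"
  proof (rule sum_tend0)
    fix p assume p: "p \<in> {1..m} \<times> C"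
    have "(\<lambda>i. e (i + fst p) (snd p) / real i) \<longlonglongrightarrow> 0" using p by (intro shift_small e) auto
    hence "(\<lambda>i. \<bar>e (i + fst p) (snd p) / real i\<bar>) \<longlonglongrightarrow> 0" by (rule tendsto_rabs_zero)
    then show "(\<lambda>i. \<bar>e (i + fst p) (snd p)\<bar> / real i) \<longlonglongrightarrow> 0" by simp
  qed (use fin in auto)
  finally show ?thesis .
qed

lemma sending_block:
  fixes u c :: "nat \<Rightarrow> nat \<Rightarrow> real" and m :: "nat \<Rightarrow> real"
  assumes fin: "finite C" and ne: "C \<noteq> {}"
    and nn: "\<And>l k. l \<in> C \<Longrightarrow> k \<in> C \<Longrightarrow> 0 \<le> A l k"
    and col: "\<And>k. k \<in> C \<Longrightarrow> (\<Sum>l\<in>C. A l k) = 1"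
    and conn: "strongly_connected_sub A C" and perron: "perron_vec A C p"
    and rec: "\<And>i k. k \<in> C \<Longrightarrow> u (Suc i) k = (\<Sum>l\<in>C. A l k * (u i l + c (Suc i) l))"
    and csmall: "\<And>l. l \<in> C \<Longrightarrow> (\<lambda>i. c i l / real i) \<longlonglongrightarrow> 0"
    and ces: "\<And>l. l \<in> C \<Longrightarrow> (\<lambda>n. (\<Sum>j<n. c (Suc j) l) / real n) \<longlonglongrightarrow> m l"
    and k: "k \<in> C"
  shows "(\<lambda>i. u i k / real i) \<longlonglongrightarrow> (\<Sum>l\<in>C. p l * m l)"
proof -
  have mpnn: "0 \<le> mp A C t x y" if "y \<in> C" for t x y
    by (rule mp_nonneg[where A=A and C=C]) (use nn that in auto)
  have colle: "\<And>k. k \<in> C \<Longrightarrow> (\<Sum>l\<in>C. A l k) \<le> 1" using col by simp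
  obtain l0 where l0: "l0 \<in> C" "0 < A l0 l0" and cn: "connected_sub A C"
    using conn unfolding strongly_connected_sub_def by blast
  obtain mm where mm: "0 < mm" "\<forall>l\<in>C. \<forall>k\<in>C. 0 < mp A C mm l k"
    using primitive[where A=A and C=C, OF fin nn cn l0] by blast
  define \<delta> where "\<delta> = Min ((\<lambda>(l, k). mp A C mm l k) ` (C \<times> C))"
  have \<delta>in: "\<delta> \<in> (\<lambda>(l, k). mp A C mm l k) ` (C \<times> C)" unfolding \<delta>_def using fin ne by (intro Min_in) auto
  have \<delta>pos: "0 < \<delta>" using \<delta>in mm(2) by auto
  have \<delta>le: "\<delta> \<le> mp A C mm l k" if "l \<in> C" "k \<in> C" for l k
    unfolding \<delta>_def using fin that by (intro Min_le) auto
  have colmp: "(\<Sum>l\<in>C. mp A C mm l k) = 1" if "k \<in> C" for k by (rule mp_colsum_eq[OF fin col that])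
  have \<delta>1: "\<delta> \<le> 1"
  proof -
    obtain a where a: "a \<in> C" using ne by blast
    have "\<delta> \<le> mp A C mm a a" using \<delta>le a by simp
    also have "\<dots> \<le> (\<Sum>l\<in>C. mp A C mm l a)" by (rule sum_ge_member[OF fin a]) (use mpnn a in auto)
    finally show ?thesis using colmp[OF a] by simp
  qed
  define e where "e i k = (\<Sum>l\<in>C. A l k * c i l)" for i k
  have rec': "u (Suc i) k = (\<Sum>l\<in>C. A l k * u i l) + e (Suc i) k" if "k \<in> C" for i k
    unfolding rec[OF that] e_def by (simp add: distrib_left sum.distrib)
  have esmall: "(\<lambda>i. e i l / real i) \<longlonglongrightarrow> 0" if "l \<in> C" for l
    unfolding e_def
  proof (rule sum_tend0[OF fin])
    fix l' assume "l' \<in> C"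
    hence "(\<lambda>i. A l' l * (c i l' / real i)) \<longlonglongrightarrow> A l' l * 0" by (intro tendsto_mult tendsto_const csmall)
    then show "(\<lambda>i. A l' l * c i l' / real i) \<longlonglongrightarrow> 0" by simp
  qed
  define Rr where "Rr i = (\<Sum>s\<in>{1..mm}. \<Sum>l\<in>C. \<bar>e (i + s) l\<bar>)" for i
  have unr: "\<bar>u (i + mm) k - (\<Sum>l\<in>C. mp A C mm l k * u i l)\<bar> \<le> Rr i" if "k \<in> C" for i k
    unfolding Rr_def by (rule unroll[where A=A and C=C and x=u and e=e, OF fin nn colle rec' that])
  have Rr_small: "(\<lambda>i. 2 * Rr i / real i) \<longlonglongrightarrow> 0"
  proof -
    have "(\<lambda>i. 2 * (Rr i / real i)) \<longlonglongrightarrow> 2 * 0"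
      unfolding Rr_def by (intro tendsto_mult tendsto_const R_small[OF fin esmall])
    then show ?thesis by simp
  qed
  define sp where "sp i = Max ((\<lambda>(a, b). u i a - u i b) ` (C \<times> C))" for i
  have sp_ge: "u i a - u i b \<le> sp i" if "a \<in> C" "b \<in> C" for i a b
    unfolding sp_def using fin that by (intro Max_ge) auto
  have sp_nn: "0 \<le> sp i" for i
  proof -
    obtain a where "a \<in> C" using ne by blast
    thus ?thesis using sp_ge[of a a i] by simp
  qed
  have sp_in: "\<exists>a\<in>C. \<exists>b\<in>C. sp i = u i a - u i b" for i
  proof -
    have "sp i \<in> (\<lambda>(a, b). u i a - u i b) ` (C \<times> C)" unfolding sp_def using fin ne by (intro Max_in) auto
    thus ?thesis by auto
  qed
  have sp_step: "sp (i + mm) \<le> (1 - \<delta>) * sp i + 2 * Rr i" for i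
  proof -
    obtain a b where ab: "a \<in> C" "b \<in> C" "sp i = u i a - u i b" using sp_in by blast
    have ub: "u i b \<le> u i l" "u i l \<le> u i a" if "l \<in> C" for l
      using sp_ge[OF that ab(2), of i] sp_ge[OF ab(1) that, of i] ab(3) by auto
    define v where "v l = u i l - u i b" for l
    have v: "0 \<le> v l" "v l \<le> sp i" if "l \<in> C" for l using ub[OF that] ab(3) unfolding v_def by auto
    have decomp: "(\<Sum>l\<in>C. mp A C mm l k * u i l) = u i b + (\<Sum>l\<in>C. mp A C mm l k * v l)" if "k \<in> C" for k
    proof -
      have "(\<Sum>l\<in>C. mp A C mm l k * u i l) = (\<Sum>l\<in>C. mp A C mm l k * u i b + mp A C mm l k * v l)"
        unfolding v_def by (intro sum.cong) (auto simp: algebra_simps)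
      also have "\<dots> = (\<Sum>l\<in>C. mp A C mm l k) * u i b + (\<Sum>l\<in>C. mp A C mm l k * v l)"
        by (simp add: sum.distrib sum_distrib_right)
      finally show ?thesis using colmp[OF that] by simp
    qed
    have upper: "(\<Sum>l\<in>C. mp A C mm l k * v l) \<le> sp i" if "k \<in> C" for k
    proof -
      have "(\<Sum>l\<in>C. mp A C mm l k * v l) \<le> (\<Sum>l\<in>C. mp A C mm l k * sp i)"
        using v mpnn that by (intro sum_mono mult_left_mono) auto
      also have "\<dots> = sp i" using colmp[OF that] by (simp add: sum_distrib_right[symmetric])
      finally show ?thesis .
    qed
    have lower: "\<delta> * sp i \<le> (\<Sum>l\<in>C. mp A C mm l k * v l)" if "k \<in> C" for k
    proof -
      have "\<delta> * sp i \<le> mp A C mm a k * v a"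
      proof -
        have "v a = sp i" unfolding v_def using ab(3) by simp
        thus ?thesis using \<delta>le[OF ab(1) that] sp_nn[of i] by (simp add: mult_right_mono)
      qed
      also have "\<dots> \<le> (\<Sum>l\<in>C. mp A C mm l k * v l)"
        by (rule sum_ge_member[OF fin ab(1)]) (use mpnn v that in \<open>auto intro!: mult_nonneg_nonneg\<close>)
      finally show ?thesis .
    qed
    have pair: "u (i + mm) k1 - u (i + mm) k2 \<le> (1 - \<delta>) * sp i + 2 * Rr i" if "k1 \<in> C" "k2 \<in> C" for k1 k2
    proof -
      have "u (i + mm) k1 \<le> u i b + (\<Sum>l\<in>C. mp A C mm l k1 * v l) + Rr i"
        using unr[OF that(1), of i] decomp[OF that(1)] by linarith
      moreover have "u i b + (\<Sum>l\<in>C. mp A C mm l k2 * v l) - Rr i \<le> u (i + mm) k2"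
        using unr[OF that(2), of i] decomp[OF that(2)] by linarith
      ultimately show ?thesis using upper[OF that(1)] lower[OF that(2)] by (simp add: algebra_simps)
    qed
    show ?thesis
    proof -
      obtain a' b' where "a' \<in> C" "b' \<in> C" "sp (i + mm) = u (i + mm) a' - u (i + mm) b'" using sp_in by blast
      thus ?thesis using pair by simp
    qed
  qed
  have sp_lim: "(\<lambda>i. sp i / real i) \<longlonglongrightarrow> 0"
    by (rule contraction_seq[OF mm(1) _ _ sp_nn sp_step Rr_small]) (use \<delta>pos \<delta>1 in auto)
  have pv: "\<And>l. l \<in> C \<Longrightarrow> (\<Sum>l'\<in>C. A l l' * p l') = p l" "sum p C = 1" "\<And>l. l \<in> C \<Longrightarrow> 0 < p l"
    using perron unfolding perron_vec_def by auto
  define w where "w i = (\<Sum>l\<in>C. p l * u i l)" for i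
  have w_step: "w (Suc i) = w i + (\<Sum>l\<in>C. p l * c (Suc i) l)" for i
  proof -
    have "w (Suc i) = (\<Sum>k\<in>C. p k * (\<Sum>l\<in>C. A l k * (u i l + c (Suc i) l)))"
      unfolding w_def by (intro sum.cong) (auto simp: rec)
    also have "\<dots> = (\<Sum>k\<in>C. \<Sum>l\<in>C. p k * A l k * (u i l + c (Suc i) l))"
      by (simp add: sum_distrib_left mult.assoc)
    also have "\<dots> = (\<Sum>l\<in>C. \<Sum>k\<in>C. p k * A l k * (u i l + c (Suc i) l))" by (rule sum.swap)
    also have "\<dots> = (\<Sum>l\<in>C. (\<Sum>k\<in>C. A l k * p k) * (u i l + c (Suc i) l))"
    proof (intro sum.cong refl)
      fix l
      show "(\<Sum>k\<in>C. p k * A l k * (u i l + c (Suc i) l)) = (\<Sum>k\<in>C. A l k * p k) * (u i l + c (Suc i) l)"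
      proof -
        have "(\<Sum>k\<in>C. p k * A l k * (u i l + c (Suc i) l)) = (\<Sum>k\<in>C. A l k * p k * (u i l + c (Suc i) l))"
          by (intro sum.cong) auto
        also have "\<dots> = (\<Sum>k\<in>C. A l k * p k) * (u i l + c (Suc i) l)" by (rule sum_distrib_right[symmetric])
        finally show ?thesis .
      qed
    qed
    also have "\<dots> = (\<Sum>l\<in>C. p l * (u i l + c (Suc i) l))" using pv(1) by (intro sum.cong) auto
    also have "\<dots> = w i + (\<Sum>l\<in>C. p l * c (Suc i) l)" unfolding w_def by (simp add: distrib_left sum.distrib)
    finally show ?thesis .
  qed
  have w_eq: "w n = w 0 + (\<Sum>l\<in>C. p l * (\<Sum>j<n. c (Suc j) l))" for n
  proof (induction n)
    case (Suc n)
    have "w (Suc n) = w 0 + (\<Sum>l\<in>C. p l * (\<Sum>j<n. c (Suc j) l)) + (\<Sum>l\<in>C. p l * c (Suc n) l)"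
      using Suc by (simp add: w_step)
    also have "\<dots> = w 0 + (\<Sum>l\<in>C. p l * (\<Sum>j<n. c (Suc j) l) + p l * c (Suc n) l)"
      by (simp add: sum.distrib)
    also have "\<dots> = w 0 + (\<Sum>l\<in>C. p l * (\<Sum>j<Suc n. c (Suc j) l))"
      by (simp add: distrib_left)
    finally show ?case .
  qed simp
  have w_lim: "(\<lambda>n. w n / real n) \<longlonglongrightarrow> (\<Sum>l\<in>C. p l * m l)"
  proof -
    have tm: "(\<lambda>n. p l * (\<Sum>j<n. c (Suc j) l) / real n) \<longlonglongrightarrow> p l * m l" if "l \<in> C" for l
      using tendsto_mult[OF tendsto_const ces[OF that], of "p l"] by simp
    have "(\<lambda>n. w 0 / real n + (\<Sum>l\<in>C. p l * (\<Sum>j<n. c (Suc j) l) / real n)) \<longlonglongrightarrow> 0 + (\<Sum>l\<in>C. p l * m l)"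
      by (intro tendsto_add lim_const_over_n tendsto_sum tm)
    moreover have "w n / real n = w 0 / real n + (\<Sum>l\<in>C. p l * (\<Sum>j<n. c (Suc j) l) / real n)" for n
      by (subst w_eq[of n]) (simp only: add_divide_distrib sum_divide_distrib)
    ultimately show ?thesis by simp
  qed
  have diff_bound: "\<bar>u i k - w i\<bar> \<le> sp i" for i
  proof -
    have "u i k - w i = (\<Sum>l\<in>C. p l * (u i k - u i l))"
      unfolding w_def using pv(2) by (simp add: right_diff_distrib sum_subtractf sum_distrib_right[symmetric])
    also have "\<bar>\<dots>\<bar> \<le> (\<Sum>l\<in>C. p l * sp i)"
    proof (rule order_trans[OF sum_abs sum_mono])
      fix l assume l: "l \<in> C"
      have "\<bar>u i k - u i l\<bar> \<le> sp i" using sp_ge[OF k l] sp_ge[OF l k] by (simp add: abs_le_iff)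
      then show "\<bar>p l * (u i k - u i l)\<bar> \<le> p l * sp i"
        using pv(3)[OF l] by (simp add: abs_mult mult_left_mono)
    qed
    also have "\<dots> = sp i" using pv(2) by (simp add: sum_distrib_right[symmetric])
    finally show ?thesis .
  qed
  have "(\<lambda>i. (u i k - w i) / real i) \<longlonglongrightarrow> 0"
  proof (rule Lim_null_comparison[OF _ sp_lim])
    show "eventually (\<lambda>i. norm ((u i k - w i) / real i) \<le> sp i / real i) sequentially"
      using diff_bound by (auto intro!: always_eventually divide_right_mono simp: abs_divide)
  qed
  hence "(\<lambda>i. (u i k - w i) / real i + w i / real i) \<longlonglongrightarrow> 0 + (\<Sum>l\<in>C. p l * m l)"
    by (intro tendsto_add w_lim)
  then show ?thesis by (simp add: add_divide_distrib[symmetric])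
qed

lemma receiving_block:
  fixes u d :: "nat \<Rightarrow> nat \<Rightarrow> real" and z D :: "nat \<Rightarrow> real"
  assumes fin: "finite C"
    and nn: "\<And>l k. l \<in> C \<Longrightarrow> k \<in> C \<Longrightarrow> 0 \<le> A l k"
    and colle: "\<And>k. k \<in> C \<Longrightarrow> (\<Sum>l\<in>C. A l k) \<le> 1"
    and mm: "0 < mm" and \<rho>: "0 \<le> \<rho>" "\<rho> < 1"
    and contr: "\<forall>k\<in>C. (\<Sum>l\<in>C. mp A C mm l k) \<le> \<rho>"
    and rec: "\<And>i k. k \<in> C \<Longrightarrow> u (Suc i) k = (\<Sum>l\<in>C. A l k * u i l) + d (Suc i) k"
    and dlim: "\<And>k. k \<in> C \<Longrightarrow> (\<lambda>i. d (Suc i) k / real (Suc i)) \<longlonglongrightarrow> D k"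
    and zfix: "\<And>k. k \<in> C \<Longrightarrow> z k = (\<Sum>l\<in>C. A l k * z l) + D k"
    and k: "k \<in> C"
  shows "(\<lambda>i. u i k / real i) \<longlonglongrightarrow> z k"
proof -
  have ne: "C \<noteq> {}" using k by blast
  have mpnn: "0 \<le> mp A C t x y" if "y \<in> C" for t x y
    by (rule mp_nonneg[where A=A and C=C]) (use nn that in auto)
  define x where "x i k = u i k - real i * z k" for i k
  define e where "e n k = d n k - real (n - 1) * D k - z k" for n k
  have recx: "x (Suc i) k = (\<Sum>l\<in>C. A l k * x i l) + e (Suc i) k" if "k \<in> C" for i k
  proof -
    have "(\<Sum>l\<in>C. A l k * x i l) = (\<Sum>l\<in>C. A l k * u i l) - real i * (\<Sum>l\<in>C. A l k * z l)"
      unfolding x_def by (simp add: right_diff_distrib sum_subtractf sum_distrib_left algebra_simps)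
    also have "(\<Sum>l\<in>C. A l k * z l) = z k - D k" using zfix[OF that] by simp
    finally have "(\<Sum>l\<in>C. A l k * x i l) = (\<Sum>l\<in>C. A l k * u i l) - real i * (z k - D k)" .
    then show ?thesis unfolding x_def e_def rec[OF that] by (simp add: algebra_simps)
  qed
  have esmall: "(\<lambda>n. e n l / real n) \<longlonglongrightarrow> 0" if l: "l \<in> C" for l
  proof -
    have "(\<lambda>i. d (Suc i) l / real (Suc i) - (real i / real (Suc i)) * D l - z l * inverse (real (Suc i)))
          \<longlonglongrightarrow> D l - 1 * D l - z l * 0"
      by (intro tendsto_diff tendsto_mult dlim[OF l] LIMSEQ_n_over_Suc_n tendsto_const LIMSEQ_inverse_real_of_nat)
    moreover have "e (Suc i) l / real (Suc i) = d (Suc i) l / real (Suc i) - (real i / real (Suc i)) * D l - z l * inverse (real (Suc i))" for i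
      unfolding e_def by (simp add: divide_inverse algebra_simps)
    ultimately have "(\<lambda>i. e (Suc i) l / real (Suc i)) \<longlonglongrightarrow> 0" by simp
    thus ?thesis using filterlim_sequentially_Suc[of "\<lambda>n. e n l / real n"] by simp
  qed
  define Rr where "Rr i = (\<Sum>s\<in>{1..mm}. \<Sum>l\<in>C. \<bar>e (i + s) l\<bar>)" for i
  have unr: "\<bar>x (i + mm) k - (\<Sum>l\<in>C. mp A C mm l k * x i l)\<bar> \<le> Rr i" if "k \<in> C" for i k
    unfolding Rr_def by (rule unroll[where A=A and C=C and x=x and e=e, OF fin nn colle recx that])
  have Rr_small: "(\<lambda>i. Rr i / real i) \<longlonglongrightarrow> 0"
    unfolding Rr_def by (rule R_small[OF fin esmall])
  define nm where "nm i = Max ((\<lambda>l. \<bar>x i l\<bar>) ` C)" for i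
  have nm_ge: "\<bar>x i l\<bar> \<le> nm i" if "l \<in> C" for i l unfolding nm_def using fin that by (intro Max_ge) auto
  have nm_nn: "0 \<le> nm i" for i using nm_ge[OF k, of i] by simp
  have nm_step: "nm (i + mm) \<le> \<rho> * nm i + Rr i" for i
  proof -
    have "\<bar>x (i + mm) k'\<bar> \<le> \<rho> * nm i + Rr i" if k': "k' \<in> C" for k'
    proof -
      have "\<bar>\<Sum>l\<in>C. mp A C mm l k' * x i l\<bar> \<le> (\<Sum>l\<in>C. mp A C mm l k' * nm i)"
        by (rule order_trans[OF sum_abs sum_mono]) (use mpnn k' nm_ge in \<open>auto simp: abs_mult intro!: mult_left_mono\<close>)
      also have "\<dots> = (\<Sum>l\<in>C. mp A C mm l k') * nm i" by (simp add: sum_distrib_right)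
      also have "\<dots> \<le> \<rho> * nm i" using contr k' nm_nn[of i] by (intro mult_right_mono) auto
      finally show ?thesis using unr[OF k', of i] by linarith
    qed
    moreover have "nm (i + mm) \<in> (\<lambda>l. \<bar>x (i + mm) l\<bar>) ` C" unfolding nm_def using fin ne by (intro Max_in) auto
    ultimately show ?thesis by auto
  qed
  have nm_lim: "(\<lambda>i. nm i / real i) \<longlonglongrightarrow> 0"
    by (rule contraction_seq[OF mm \<rho> nm_nn nm_step Rr_small])
  have "(\<lambda>i. x i k / real i) \<longlonglongrightarrow> 0"
  proof (rule Lim_null_comparison[OF _ nm_lim])
    show "eventually (\<lambda>i. norm (x i k / real i) \<le> nm i / real i) sequentially"
      using nm_ge[OF k] by (auto intro!: always_eventually divide_right_mono simp: abs_divide)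
  qed
  hence "(\<lambda>i. x i k / real i + z k) \<longlonglongrightarrow> 0 + z k" by (intro tendsto_add tendsto_const)
  moreover have "eventually (\<lambda>i. x i k / real i + z k = u i k / real i) sequentially"
    using eventually_gt_at_top[of 0] by eventually_elim (simp add: x_def field_simps)
  ultimately show ?thesis by (simp add: tendsto_cong)
qed

lemma network_limit:
  fixes u c :: "nat \<Rightarrow> nat \<Rightarrow> real" and m :: "nat \<Rightarrow> real"
  assumes graph: "weak_graph N A cmp S R"
    and perron: "\<forall>s<S. perron_vec A (subnet cmp N s) p"
    and inv: "inverse_I_minus A (receiving cmp N S) B"
    and rec: "\<And>i k. k < N \<Longrightarrow> u (Suc i) k = (\<Sum>l<N. A l k * (u i l + c (Suc i) l))"
    and ces: "\<And>l. l < N \<Longrightarrow> (\<lambda>n. (\<Sum>j<n. c (Suc j) l) / real n) \<longlonglongrightarrow> m l"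
    and k: "k \<in> receiving cmp N S"
  shows "(\<lambda>i. u i k / real i) \<longlonglongrightarrow> (\<Sum>l\<in>sending cmp N S. omega N A cmp S p B l k * m l)"
proof -
  define Ss where "Ss = sending cmp N S"
  define Rs where "Rs = receiving cmp N S"
  define sub where "sub s = subnet cmp N s" for s
  note G = graph[unfolded weak_graph_def]
  note G1 = G[THEN conjunct1]
  note G2 = G[THEN conjunct2, THEN conjunct1]
  note G3 = G[THEN conjunct2, THEN conjunct2, THEN conjunct1]
  note G6 = G[THEN conjunct2, THEN conjunct2, THEN conjunct2, THEN conjunct2, THEN conjunct2, THEN conjunct1]
  note G7 = G[THEN conjunct2, THEN conjunct2, THEN conjunct2, THEN conjunct2, THEN conjunct2, THEN conjunct2, THEN conjunct1]
  note G8 = G[THEN conjunct2, THEN conjunct2, THEN conjunct2, THEN conjunct2, THEN conjunct2, THEN conjunct2, THEN conjunct2, THEN conjunct1]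
  note G9 = G[THEN conjunct2, THEN conjunct2, THEN conjunct2, THEN conjunct2, THEN conjunct2, THEN conjunct2, THEN conjunct2, THEN conjunct2, THEN conjunct1]
  note G10 = G[THEN conjunct2, THEN conjunct2, THEN conjunct2, THEN conjunct2, THEN conjunct2, THEN conjunct2, THEN conjunct2, THEN conjunct2, THEN conjunct2]
  have g1: "\<And>l k. l < N \<Longrightarrow> k < N \<Longrightarrow> 0 \<le> A l k" using G1 by blast
  have g2: "\<And>k. k < N \<Longrightarrow> (\<Sum>l<N. A l k) = 1" using G2 by blast
  have g3: "\<And>k. k < N \<Longrightarrow> cmp k < S + R" using G3 by blast
  have g6: "\<And>l k. l < N \<Longrightarrow> k < N \<Longrightarrow> cmp l < S \<Longrightarrow> cmp k < S \<Longrightarrow> cmp l \<noteq> cmp k \<Longrightarrow> A l k = 0"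
    using G6 by blast
  have g7: "\<And>l k. l < N \<Longrightarrow> k < N \<Longrightarrow> S \<le> cmp l \<Longrightarrow> cmp k < S \<Longrightarrow> A l k = 0" using G7 by blast
  have g8: "\<And>s. s < S \<Longrightarrow> strongly_connected_sub A (sub s)" using G8 unfolding sub_def by blast
  have g9: "\<And>r. r < R \<Longrightarrow> connected_sub A (sub (S + r))" using G9 unfolding sub_def by blast
  have g10: "\<And>r s. r < R \<Longrightarrow> s < S \<Longrightarrow> \<exists>l\<in>sub s. \<exists>k\<in>sub (S + r). 0 < A l k"
    using G10 unfolding sub_def by blast
  have finN: "finite {..<N}" by simp
  have SsRs: "{..<N} = Ss \<union> Rs" "Ss \<inter> Rs = {}" unfolding Ss_def Rs_def sending_def receiving_def by auto
  have finS: "finite Ss" and finR: "finite Rs" unfolding Ss_def Rs_def sending_def receiving_def by auto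
  have sub_fin: "finite (sub s)" for s unfolding sub_def subnet_def by auto
  have sub_N: "sub s \<subseteq> {..<N}" for s unfolding sub_def subnet_def by auto
  have csmall: "(\<lambda>i. c i l / real i) \<longlonglongrightarrow> 0" if "l < N" for l by (rule ces_small[OF ces[OF that]])

  define Mv where "Mv l = (\<Sum>l'\<in>sub (cmp l). p l' * m l')" for l
  have zero_out: "A l' k' = 0" if "k' \<in> sub s" "s < S" "l' < N" "l' \<notin> sub s" for l' k' s
  proof -
    have k': "k' < N" "cmp k' = s" using that(1) unfolding sub_def subnet_def by auto
    have "cmp l' \<noteq> s" using that(3,4) unfolding sub_def subnet_def by auto
    show ?thesis
    proof (cases "cmp l' < S")
      case True then show ?thesis using g6[OF that(3) k'(1)] k' \<open>cmp l' \<noteq> s\<close> that(2) by auto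
    next
      case False then show ?thesis using g7[OF that(3) k'(1)] k' that(2) by auto
    qed
  qed
  have sum_sub: "(\<Sum>l<N. A l k' * f l) = (\<Sum>l\<in>sub s. A l k' * f l)" if "k' \<in> sub s" "s < S" for k' s f
    by (rule sum.mono_neutral_right) (use sub_N zero_out[OF that] in auto)
  have send_lim: "(\<lambda>i. u i l / real i) \<longlonglongrightarrow> Mv l" if l: "l \<in> Ss" for l
  proof -
    define s where "s = cmp l"
    have s: "s < S" "l \<in> sub s" using l unfolding Ss_def sending_def s_def sub_def subnet_def by auto
    show ?thesis unfolding Mv_def s_def[symmetric]
    proof (rule sending_block[where A=A and C="sub s" and c=c])
      show "finite (sub s)" by (rule sub_fin)
      show "sub s \<noteq> {}" using s by blast
      show "0 \<le> A l' k'" if "l' \<in> sub s" "k' \<in> sub s" for l' k' using that sub_N g1 by blast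
      show "(\<Sum>l'\<in>sub s. A l' k') = 1" if "k' \<in> sub s" for k'
        using sum_sub[OF that s(1), of "\<lambda>_. 1"] g2[of k'] that sub_N by auto
      show "strongly_connected_sub A (sub s)" by (rule g8[OF s(1)])
      show "perron_vec A (sub s) p" using perron s(1) unfolding sub_def by blast
      show "u (Suc i) k' = (\<Sum>l'\<in>sub s. A l' k' * (u i l' + c (Suc i) l'))" if "k' \<in> sub s" for i k'
        using rec[of k' i] sum_sub[OF that s(1)] that sub_N by auto
      show "(\<lambda>i. c i l' / real i) \<longlonglongrightarrow> 0" if "l' \<in> sub s" for l' using that sub_N csmall by blast
      show "(\<lambda>n. (\<Sum>j<n. c (Suc j) l') / real n) \<longlonglongrightarrow> m l'" if "l' \<in> sub s" for l' using that sub_N ces by blast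
      show "l \<in> sub s" by (rule s(2))
    qed
  qed
  have kR: "k \<in> Rs" using k unfolding Rs_def .
  have RsN: "Rs \<subseteq> {..<N}" and SsN: "Ss \<subseteq> {..<N}" using SsRs by auto
  have sumN: "(\<Sum>l<N. f l) = (\<Sum>l\<in>Ss. f l) + (\<Sum>l\<in>Rs. f l)" for f :: "nat \<Rightarrow> real"
    unfolding SsRs(1) by (rule sum.union_disjoint[OF finS finR SsRs(2)])
  have inv1: "\<And>i k. i \<in> Rs \<Longrightarrow> k \<in> Rs \<Longrightarrow> (\<Sum>j\<in>Rs. ((if i = j then 1 else 0) - A i j) * B j k) = (if i = k then 1 else 0)"
    and inv2: "\<And>i k. i \<in> Rs \<Longrightarrow> k \<in> Rs \<Longrightarrow> (\<Sum>j\<in>Rs. B i j * ((if j = k then 1 else 0) - A j k)) = (if i = k then 1 else 0)"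
    using inv unfolding inverse_I_minus_def Rs_def by blast+
  have S0: "0 < S"
  proof (rule ccontr)
    assume "\<not> 0 < S"
    hence RsAll: "Rs = {..<N}" unfolding Rs_def receiving_def by auto
    have "(\<Sum>i\<in>Rs. \<Sum>j\<in>Rs. ((if i = j then 1 else 0) - A i j) * B j k) = (\<Sum>i\<in>Rs. (if i = k then 1 else 0 :: real))"
      using inv1 kR by (intro sum.cong) auto
    also have "\<dots> = 1" using kR finR by simp
    finally have one: "(\<Sum>i\<in>Rs. \<Sum>j\<in>Rs. ((if i = j then 1 else 0) - A i j) * B j k) = 1" .
    have "(\<Sum>i\<in>Rs. \<Sum>j\<in>Rs. ((if i = j then 1 else 0) - A i j) * B j k)
        = (\<Sum>j\<in>Rs. \<Sum>i\<in>Rs. ((if i = j then 1 else 0) - A i j) * B j k)" by (rule sum.swap)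
    also have "\<dots> = (\<Sum>j\<in>Rs. (\<Sum>i\<in>Rs. ((if i = j then 1 else 0) - A i j)) * B j k)"
      by (simp add: sum_distrib_right)
    also have "\<dots> = 0"
    proof (intro sum.neutral ballI)
      fix j assume j: "j \<in> Rs"
      have "(\<Sum>i\<in>Rs. ((if i = j then 1 else 0) - A i j)) = 1 - (\<Sum>i\<in>Rs. A i j)"
        using j finR by (simp add: sum_subtractf)
      also have "(\<Sum>i\<in>Rs. A i j) = 1" using g2[of j] j unfolding RsAll by auto
      finally show "(\<Sum>i\<in>Rs. ((if i = j then 1 else 0) - A i j)) * B j k = 0" by simp
    qed
    finally show False using one by simp
  qed
  have nnR: "0 \<le> A l k'" if "l \<in> Rs" "k' \<in> Rs" for l k' using that RsN g1 by blast
  have colR: "(\<Sum>l\<in>Rs. A l k') \<le> 1" if "k' \<in> Rs" for k'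
  proof -
    have "(\<Sum>l\<in>Rs. A l k') \<le> (\<Sum>l<N. A l k')" using RsN that by (intro sum_mono2) (auto intro: g1)
    thus ?thesis using g2[of k'] that RsN by auto
  qed
  have reach: "\<exists>k'\<in>Rs. (\<Sum>l\<in>Rs. A l k') < 1 \<and> (k', k1) \<in> (edges_in A Rs)\<^sup>*" if k1: "k1 \<in> Rs" for k1
  proof -
    define r where "r = cmp k1 - S"
    have k1N: "k1 < N" "S \<le> cmp k1" using k1 unfolding Rs_def receiving_def by auto
    have r: "r < R" "cmp k1 = S + r" using g3[OF k1N(1)] k1N unfolding r_def by auto
    obtain l k' where lk: "l \<in> sub 0" "k' \<in> sub (S + r)" "0 < A l k'" using g10[OF r(1) S0] by blast
    have lS: "l \<in> Ss" using lk(1) S0 unfolding sub_def subnet_def Ss_def sending_def by auto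
    have k'R: "k' \<in> Rs" using lk(2) unfolding sub_def subnet_def Rs_def receiving_def by auto
    have "A l k' \<le> (\<Sum>l'\<in>Ss. A l' k')"
      by (rule sum_ge_member[OF finS lS]) (use SsN k'R RsN g1 in blast)
    moreover have "(\<Sum>l'\<in>Ss. A l' k') + (\<Sum>l'\<in>Rs. A l' k') = 1" using sumN[of "\<lambda>l'. A l' k'"] g2[of k'] k'R RsN by auto
    ultimately have lt: "(\<Sum>l'\<in>Rs. A l' k') < 1" using lk(3) by linarith
    have k1sub: "k1 \<in> sub (S + r)" using k1N r unfolding sub_def subnet_def by auto
    have "(k', k1) \<in> (edges_in A (sub (S + r)))\<^sup>*" using g9[OF r(1)] lk(2) k1sub unfolding connected_sub_def by blast
    moreover have "edges_in A (sub (S + r)) \<subseteq> edges_in A Rs"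
      unfolding edges_in_def sub_def subnet_def Rs_def receiving_def by auto
    ultimately have "(k', k1) \<in> (edges_in A Rs)\<^sup>*" using rtrancl_mono by blast
    then show ?thesis using lt k'R by blast
  qed
  obtain mm \<rho> where mm: "0 < mm" "0 \<le> \<rho>" "\<rho> < 1" "\<forall>k\<in>Rs. (\<Sum>l\<in>Rs. mp A Rs mm l k) \<le> \<rho>"
    using substoch_contract[where A=A and C=Rs, OF finR nnR colR reach] by blast
  define D where "D k' = (\<Sum>l\<in>Ss. A l k' * Mv l)" for k'
  define z where "z k' = (\<Sum>j\<in>Rs. B j k' * D j)" for k'
  define d where "d n k' = (\<Sum>l\<in>Rs. A l k' * c n l) + (\<Sum>l\<in>Ss. A l k' * (u (n - 1) l + c n l))" for n k'
  have recR: "u (Suc i) k' = (\<Sum>l\<in>Rs. A l k' * u i l) + d (Suc i) k'" if "k' \<in> Rs" for i k'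
  proof -
    have "u (Suc i) k' = (\<Sum>l\<in>Ss. A l k' * (u i l + c (Suc i) l)) + (\<Sum>l\<in>Rs. A l k' * (u i l + c (Suc i) l))"
      using rec[of k' i] that RsN sumN by auto
    also have "(\<Sum>l\<in>Rs. A l k' * (u i l + c (Suc i) l)) = (\<Sum>l\<in>Rs. A l k' * u i l) + (\<Sum>l\<in>Rs. A l k' * c (Suc i) l)"
      by (simp add: distrib_left sum.distrib)
    finally show ?thesis unfolding d_def by simp
  qed
  have csuc: "(\<lambda>i. c (Suc i) l / real (Suc i)) \<longlonglongrightarrow> 0" if "l < N" for l
    using LIMSEQ_Suc[OF csmall[OF that]] .
  have usuc: "(\<lambda>i. u i l / real (Suc i)) \<longlonglongrightarrow> Mv l" if "l \<in> Ss" for l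
  proof -
    have L: "(\<lambda>i. u i l / real i * (real i / real (Suc i))) \<longlonglongrightarrow> Mv l * 1"
      by (intro tendsto_mult send_lim[OF that] LIMSEQ_n_over_Suc_n)
    have ev: "eventually (\<lambda>i. u i l / real i * (real i / real (Suc i)) = u i l / real (Suc i)) sequentially"
      using eventually_gt_at_top[of 0]
    proof eventually_elim
      case (elim i)
      then have "real i \<noteq> 0" by simp
      then show ?case by (rule div_mul_div_cancel)
    qed
    show ?thesis using Lim_transform_eventually[OF L ev] by simp
  qed
  have dlim: "(\<lambda>i. d (Suc i) k' / real (Suc i)) \<longlonglongrightarrow> D k'" if "k' \<in> Rs" for k'
  proof -
    have "(\<lambda>i. (\<Sum>l\<in>Rs. A l k' * (c (Suc i) l / real (Suc i))) + (\<Sum>l\<in>Ss. A l k' * (u i l / real (Suc i) + c (Suc i) l / real (Suc i))))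
          \<longlonglongrightarrow> (\<Sum>l\<in>Rs. A l k' * 0) + (\<Sum>l\<in>Ss. A l k' * (Mv l + 0))"
      by (intro tendsto_add tendsto_sum tendsto_mult tendsto_const csuc usuc) (use RsN SsN in auto)
    moreover have "d (Suc i) k' / real (Suc i) = (\<Sum>l\<in>Rs. A l k' * (c (Suc i) l / real (Suc i))) + (\<Sum>l\<in>Ss. A l k' * (u i l / real (Suc i) + c (Suc i) l / real (Suc i)))" for i
      unfolding d_def by (simp add: add_divide_distrib sum_divide_distrib distrib_left)
    ultimately show ?thesis unfolding D_def by simp
  qed
  have zfix: "z k' = (\<Sum>l\<in>Rs. A l k' * z l) + D k'" if k': "k' \<in> Rs" for k'
  proof -
    have "(\<Sum>l\<in>Rs. A l k' * z l) = (\<Sum>l\<in>Rs. \<Sum>j\<in>Rs. A l k' * B j l * D j)"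
      unfolding z_def by (simp add: sum_distrib_left mult.assoc)
    also have "\<dots> = (\<Sum>j\<in>Rs. \<Sum>l\<in>Rs. A l k' * B j l * D j)" by (rule sum.swap)
    also have "\<dots> = (\<Sum>j\<in>Rs. (\<Sum>l\<in>Rs. B j l * A l k') * D j)"
    proof (intro sum.cong refl)
      fix j
      show "(\<Sum>l\<in>Rs. A l k' * B j l * D j) = (\<Sum>l\<in>Rs. B j l * A l k') * D j"
        by (subst sum_distrib_right) (simp add: mult_ac)
    qed
    also have "\<dots> = (\<Sum>j\<in>Rs. (B j k' - (if j = k' then 1 else 0)) * D j)"
    proof (intro sum.cong refl)
      fix j assume j: "j \<in> Rs"
      have "(\<Sum>l\<in>Rs. B j l * ((if l = k' then 1 else 0) - A l k')) = (if j = k' then 1 else 0)"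
        by (rule inv2[OF j k'])
      moreover have "(\<Sum>l\<in>Rs. B j l * ((if l = k' then 1 else 0) - A l k')) = B j k' - (\<Sum>l\<in>Rs. B j l * A l k')"
      proof -
        have "(\<Sum>l\<in>Rs. B j l * ((if l = k' then 1 else 0) - A l k')) = (\<Sum>l\<in>Rs. B j l * (if l = k' then 1 else 0)) - (\<Sum>l\<in>Rs. B j l * A l k')"
          by (simp add: right_diff_distrib sum_subtractf)
        also have "(\<Sum>l\<in>Rs. B j l * (if l = k' then 1 else 0)) = (\<Sum>l\<in>Rs. if l = k' then B j l else 0)"
          by (intro sum.cong) auto
        also have "\<dots> = B j k'" using k' finR by (simp add: sum.delta')
        finally show ?thesis .
      qed
      ultimately show "(\<Sum>l\<in>Rs. B j l * A l k') * D j = (B j k' - (if j = k' then 1 else 0)) * D j" by simp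
    qed
    also have "\<dots> = z k' - D k'"
    proof -
      have "(\<Sum>j\<in>Rs. (B j k' - (if j = k' then 1 else 0)) * D j) = (\<Sum>j\<in>Rs. B j k' * D j) - (\<Sum>j\<in>Rs. (if j = k' then 1 else 0) * D j)"
        by (simp add: left_diff_distrib sum_subtractf)
      also have "(\<Sum>j\<in>Rs. (if j = k' then 1 else 0) * D j) = (\<Sum>j\<in>Rs. if j = k' then D j else 0)"
        by (intro sum.cong) auto
      also have "\<dots> = D k'" using k' finR by (simp add: sum.delta')
      finally show ?thesis unfolding z_def .
    qed
    finally show ?thesis by simp
  qed
  have ulim: "(\<lambda>i. u i k / real i) \<longlonglongrightarrow> z k"
    by (rule receiving_block[where A=A and C=Rs and d=d and D=D, OF finR nnR colR mm recR dlim zfix kR])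
  have "z k = (\<Sum>l\<in>Ss. omega N A cmp S p B l k * m l)"
  proof -
    have Esum: "(\<Sum>l\<in>Ss. Emat cmp p l l' * m l) = Mv l'" if l': "l' \<in> Ss" for l'
    proof -
      have sub_eq: "sub (cmp l') = {l \<in> Ss. cmp l = cmp l'}"
        using l' unfolding sub_def subnet_def Ss_def sending_def by auto
      have "(\<Sum>l\<in>Ss. Emat cmp p l l' * m l) = (\<Sum>l\<in>Ss. if cmp l = cmp l' then p l * m l else 0)"
        unfolding Emat_def by (intro sum.cong) auto
      also have "\<dots> = (\<Sum>l\<in>{l \<in> Ss. cmp l = cmp l'}. p l * m l)" using finS by (simp add: sum.inter_filter)
      finally show ?thesis unfolding Mv_def sub_eq .
    qed
    have "(\<Sum>l\<in>Ss. omega N A cmp S p B l k * m l)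
        = (\<Sum>l\<in>Ss. \<Sum>l'\<in>Ss. Emat cmp p l l' * m l * (\<Sum>j\<in>Rs. A l' j * B j k))"
    proof (intro sum.cong refl)
      fix l
      show "omega N A cmp S p B l k * m l = (\<Sum>l'\<in>Ss. Emat cmp p l l' * m l * (\<Sum>j\<in>Rs. A l' j * B j k))"
        unfolding omega_def Ss_def[symmetric] Rs_def[symmetric] by (subst sum_distrib_right) (simp add: mult_ac)
    qed
    also have "\<dots> = (\<Sum>l'\<in>Ss. \<Sum>l\<in>Ss. Emat cmp p l l' * m l * (\<Sum>j\<in>Rs. A l' j * B j k))" by (rule sum.swap)
    also have "\<dots> = (\<Sum>l'\<in>Ss. Mv l' * (\<Sum>j\<in>Rs. A l' j * B j k))"
    proof (intro sum.cong refl)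
      fix l' assume "l' \<in> Ss"
      then show "(\<Sum>l\<in>Ss. Emat cmp p l l' * m l * (\<Sum>j\<in>Rs. A l' j * B j k)) = Mv l' * (\<Sum>j\<in>Rs. A l' j * B j k)"
        using Esum by (simp add: sum_distrib_right[symmetric])
    qed
    also have "\<dots> = (\<Sum>l'\<in>Ss. \<Sum>j\<in>Rs. B j k * (A l' j * Mv l'))" by (simp add: sum_distrib_left mult.commute mult.left_commute)
    also have "\<dots> = (\<Sum>j\<in>Rs. \<Sum>l'\<in>Ss. B j k * (A l' j * Mv l'))" by (rule sum.swap)
    also have "\<dots> = z k" unfolding z_def D_def by (simp add: sum_distrib_left)
    finally show ?thesis by simp
  qed
  then show ?thesis using ulim unfolding Ss_def by simp
qed

lemma data_slln:
  fixes \<xi> :: "nat \<Rightarrow> 'w \<Rightarrow> 'x" and h :: "'x \<Rightarrow> real"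
  assumes prob: "prob_space M"
    and distr: "\<And>i. i \<ge> 1 \<Longrightarrow> distributed M \<nu> (\<xi> i) g"
    and indep: "prob_space.indep_vars M (\<lambda>_. \<nu>) \<xi> {1..}"
    and hm[measurable]: "h \<in> borel_measurable \<nu>"
    and hint: "integrable (density \<nu> g) h"
  shows "AE \<omega> in M. (\<lambda>n. (\<Sum>j<n. h (\<xi> (Suc j) \<omega>)) / real n) \<longlonglongrightarrow> integral\<^sup>L (density \<nu> g) h"
proof -
  interpret prob_space M by (rule prob)
  have meas: "\<xi> i \<in> measurable M \<nu>" if "i \<ge> 1" for i using distr[OF that] unfolding distributed_def by blast
  have deq: "distr M \<nu> (\<xi> i) = density \<nu> g" if "i \<ge> 1" for i using distr[OF that] unfolding distributed_def by blast
  define X where "X j \<omega> = h (\<xi> (Suc j) \<omega>)" for j \<omega>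
  have ms: "\<xi> (Suc j) \<in> measurable M \<nu>" for j by (rule meas) simp
  have rv: "random_variable borel (X j)" for j
    unfolding X_def by (rule measurable_compose[OF ms hm])
  have ident: "distr M borel (X j) = distr (density \<nu> g) borel h" for j
  proof -
    have "distr M borel (X j) = distr (distr M \<nu> (\<xi> (Suc j))) borel h"
      unfolding X_def by (subst distr_distr[OF hm ms]) (simp add: comp_def)
    also have "\<dots> = distr (density \<nu> g) borel h" using deq[of "Suc j"] by simp
    finally show ?thesis .
  qed
  have indepX: "indep_var borel (X i) borel (X j)" if "i \<noteq> j" for i j
  proof -
    have iv: "indep_var (PiM {Suc i} (\<lambda>_. \<nu>)) (\<lambda>\<omega>. restrict (\<lambda>t. \<xi> t \<omega>) {Suc i})
                        (PiM {Suc j} (\<lambda>_. \<nu>)) (\<lambda>\<omega>. restrict (\<lambda>t. \<xi> t \<omega>) {Suc j})"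
      by (rule indep_var_restrict[OF indep]) (use that in auto)
    have m1: "(\<lambda>y. h (y (Suc i))) \<in> borel_measurable (PiM {Suc i} (\<lambda>_. \<nu>))"
    proof -
      have "(\<lambda>y. y (Suc i)) \<in> measurable (PiM {Suc i} (\<lambda>_. \<nu>)) \<nu>"
        using measurable_component_singleton[of "Suc i" "{Suc i}" "\<lambda>_. \<nu>"] by simp
      thus ?thesis using hm by (rule measurable_compose)
    qed
    have m2: "(\<lambda>y. h (y (Suc j))) \<in> borel_measurable (PiM {Suc j} (\<lambda>_. \<nu>))"
    proof -
      have "(\<lambda>y. y (Suc j)) \<in> measurable (PiM {Suc j} (\<lambda>_. \<nu>)) \<nu>"
        using measurable_component_singleton[of "Suc j" "{Suc j}" "\<lambda>_. \<nu>"] by simp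
      thus ?thesis using hm by (rule measurable_compose)
    qed
    have "indep_var borel ((\<lambda>y. h (y (Suc i))) \<circ> (\<lambda>\<omega>. restrict (\<lambda>t. \<xi> t \<omega>) {Suc i}))
                    borel ((\<lambda>y. h (y (Suc j))) \<circ> (\<lambda>\<omega>. restrict (\<lambda>t. \<xi> t \<omega>) {Suc j}))"
      by (rule indep_var_compose[OF iv m1 m2])
    moreover have "(\<lambda>y. h (y (Suc i))) \<circ> (\<lambda>\<omega>. restrict (\<lambda>t. \<xi> t \<omega>) {Suc i}) = X i"
      "(\<lambda>y. h (y (Suc j))) \<circ> (\<lambda>\<omega>. restrict (\<lambda>t. \<xi> t \<omega>) {Suc j}) = X j"
      by (auto simp: X_def fun_eq_iff)
    ultimately show ?thesis by simp
  qed
  have intX: "integrable M (X 0)"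
  proof -
    have "integrable (distr M \<nu> (\<xi> (Suc 0))) h" using hint deq[of "Suc 0"] by simp
    thus ?thesis unfolding X_def by (subst (asm) integrable_distr_eq[OF ms hm])
  qed
  have EX: "expectation (X 0) = integral\<^sup>L (density \<nu> g) h"
  proof -
    have "expectation (X 0) = integral\<^sup>L (distr M \<nu> (\<xi> (Suc 0))) h"
      unfolding X_def by (rule integral_distr[OF ms hm, symmetric])
    also have "\<dots> = integral\<^sup>L (density \<nu> g) h" using deq[of "Suc 0"] by simp
    finally show ?thesis .
  qed
  have "AE \<omega> in M. (\<lambda>n. (\<Sum>i<n. X i \<omega>) / real n) \<longlonglongrightarrow> expectation (X 0)"
    by (rule slln[OF rv indepX]) (auto simp: ident intX)
  then show ?thesis unfolding EX X_def .
qed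

lemma belief_Suc_pos:
  "0 < belief A N L \<mu>0 x (Suc i) k \<theta>"
  by (simp add: Let_def sum_pos)

lemma belief_Suc_sum:
  "(\<Sum>\<theta>\<in>UNIV. belief A N L \<mu>0 x (Suc i) k \<theta>) = 1"
proof -
  define E where "E \<theta> = exp (\<Sum>l<N. A l k * ln (belief A N L \<mu>0 x i l \<theta> * L l (x l (Suc i)) \<theta> /
                      (\<Sum>\<theta>'\<in>UNIV. belief A N L \<mu>0 x i l \<theta>' * L l (x l (Suc i)) \<theta>')))" for \<theta>
  have "(\<Sum>\<theta>\<in>UNIV. belief A N L \<mu>0 x (Suc i) k \<theta>) = (\<Sum>\<theta>\<in>UNIV. E \<theta> / (\<Sum>\<theta>'\<in>UNIV. E \<theta>'))"
    by (simp add: Let_def E_def)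
  also have "\<dots> = (\<Sum>\<theta>\<in>UNIV. E \<theta>) / (\<Sum>\<theta>'\<in>UNIV. E \<theta>')" by (rule sum_divide_distrib[symmetric])
  also have "\<dots> = 1"
  proof -
    have "0 < (\<Sum>\<theta>\<in>UNIV. E \<theta>)" by (intro sum_pos) (auto simp: E_def)
    thus ?thesis by simp
  qed
  finally show ?thesis .
qed

lemma belief_log_rec:
  assumes pos: "\<And>l \<theta>. l < N \<Longrightarrow> 0 < belief A N L \<mu>0 x i l \<theta>"
    and Lpos: "\<And>l \<theta>. l < N \<Longrightarrow> 0 < L l (x l (Suc i)) \<theta>"
  shows "ln (belief A N L \<mu>0 x (Suc i) k \<theta>) - ln (belief A N L \<mu>0 x (Suc i) k \<theta>s)
       = (\<Sum>l<N. A l k * ((ln (belief A N L \<mu>0 x i l \<theta>) - ln (belief A N L \<mu>0 x i l \<theta>s))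
                          + (ln (L l (x l (Suc i)) \<theta>) - ln (L l (x l (Suc i)) \<theta>s))))"
proof -
  define \<mu> where "\<mu> = belief A N L \<mu>0 x i"
  define Z where "Z l = (\<Sum>\<theta>'\<in>UNIV. \<mu> l \<theta>' * L l (x l (Suc i)) \<theta>')" for l
  define \<psi> where "\<psi> l \<theta> = \<mu> l \<theta> * L l (x l (Suc i)) \<theta> / Z l" for l \<theta>
  define E where "E \<theta> = (\<Sum>l<N. A l k * ln (\<psi> l \<theta>))" for \<theta>
  have bel: "belief A N L \<mu>0 x (Suc i) k \<theta>' = exp (E \<theta>') / (\<Sum>\<theta>''\<in>UNIV. exp (E \<theta>''))" for \<theta>'
    by (simp add: Let_def E_def \<psi>_def Z_def \<mu>_def)
  have Zpos: "0 < (\<Sum>\<theta>''\<in>UNIV. exp (E \<theta>''))" by (rule sum_pos) auto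
  have lnb: "ln (belief A N L \<mu>0 x (Suc i) k \<theta>') = E \<theta>' - ln (\<Sum>\<theta>''\<in>UNIV. exp (E \<theta>''))" for \<theta>'
    unfolding bel ln_div using Zpos by simp
  have Zlpos: "0 < Z l" if "l < N" for l
    unfolding Z_def using pos[OF that] Lpos[OF that] \<mu>_def by (intro sum_pos) auto
  have lnpsi: "ln (\<psi> l \<theta>') = ln (\<mu> l \<theta>') + ln (L l (x l (Suc i)) \<theta>') - ln (Z l)" if "l < N" for l \<theta>'
  proof -
    have a: "0 < \<mu> l \<theta>'" "0 < L l (x l (Suc i)) \<theta>'" "0 < Z l"
      using pos[OF that] Lpos[OF that] Zlpos[OF that] unfolding \<mu>_def by auto
    have "ln (\<psi> l \<theta>') = ln (\<mu> l \<theta>' * L l (x l (Suc i)) \<theta>') - ln (Z l)"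
      unfolding \<psi>_def ln_div using a by simp
    also have "ln (\<mu> l \<theta>' * L l (x l (Suc i)) \<theta>') = ln (\<mu> l \<theta>') + ln (L l (x l (Suc i)) \<theta>')"
      unfolding ln_mult using a by simp
    finally show ?thesis .
  qed
  have "E \<theta> - E \<theta>s = (\<Sum>l<N. A l k * (ln (\<psi> l \<theta>) - ln (\<psi> l \<theta>s)))"
    unfolding E_def by (simp add: sum_subtractf right_diff_distrib)
  also have "\<dots> = (\<Sum>l<N. A l k * ((ln (\<mu> l \<theta>) - ln (\<mu> l \<theta>s)) + (ln (L l (x l (Suc i)) \<theta>) - ln (L l (x l (Suc i)) \<theta>s))))"
    by (intro sum.cong refl) (simp add: lnpsi)
  finally show ?thesis unfolding lnb \<mu>_def by simp
qed

lemma det_part: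
  fixes x :: "nat \<Rightarrow> nat \<Rightarrow> 'x" and \<theta>s :: "'h::finite" and mv :: "'h \<Rightarrow> nat \<Rightarrow> real"
    and L :: "nat \<Rightarrow> 'x \<Rightarrow> 'h \<Rightarrow> real"
  assumes graph: "weak_graph N A cmp S R"
    and perron: "\<forall>s<S. perron_vec A (subnet cmp N s) p"
    and inv: "inverse_I_minus A (receiving cmp N S) B"
    and k: "k \<in> receiving cmp N S"
    and init_pos: "\<forall>k<N. \<forall>\<theta>. 0 < \<mu>0 k \<theta>"
    and Lpos: "\<And>l i \<theta>. l < N \<Longrightarrow> 1 \<le> i \<Longrightarrow> 0 < L l (x l i) \<theta>"
    and ces: "\<And>l \<theta>. l < N \<Longrightarrow> (\<lambda>n. (\<Sum>j<n. ln (L l (x l (Suc j)) \<theta>) - ln (L l (x l (Suc j)) \<theta>s)) / real n) \<longlonglongrightarrow> mv \<theta> l"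
    and gneg: "\<And>\<theta>. \<theta> \<noteq> \<theta>s \<Longrightarrow> (\<Sum>l\<in>sending cmp N S. omega N A cmp S p B l k * mv \<theta> l) < 0"
  shows "(\<lambda>i. belief A N L \<mu>0 x i k \<theta>s) \<longlonglongrightarrow> 1 \<and>
         (\<forall>\<theta>. \<theta> \<noteq> \<theta>s \<longrightarrow> (\<lambda>i. ln (belief A N L \<mu>0 x i k \<theta>) / real i) \<longlonglongrightarrow> (\<Sum>l\<in>sending cmp N S. omega N A cmp S p B l k * mv \<theta> l))"
proof -
  define \<mu> where "\<mu> i l \<theta> = belief A N L \<mu>0 x i l \<theta>" for i l \<theta>
  have kN: "k < N" using k unfolding receiving_def by auto
  have pos: "0 < \<mu> i l \<theta>" if "l < N" for i l \<theta>
  proof (cases i)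
    case 0 then show ?thesis using init_pos that unfolding \<mu>_def by simp
  next
    case (Suc j) then show ?thesis unfolding \<mu>_def by (simp only: belief_Suc_pos)
  qed
  define u where "u \<theta> i l = ln (\<mu> i l \<theta>) - ln (\<mu> i l \<theta>s)" for \<theta> i l
  define G where "G \<theta> = (\<Sum>l\<in>sending cmp N S. omega N A cmp S p B l k * mv \<theta> l)" for \<theta>
  have ulim: "(\<lambda>i. u \<theta> i k / real i) \<longlonglongrightarrow> G \<theta>" for \<theta>
    unfolding G_def
  proof (rule network_limit[OF graph perron inv _ _ k])
    show "u \<theta> (Suc i) k' = (\<Sum>l<N. A l k' * (u \<theta> i l + (ln (L l (x l (Suc i)) \<theta>) - ln (L l (x l (Suc i)) \<theta>s))))"
      if "k' < N" for i k'
      unfolding u_def \<mu>_def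
      by (rule belief_log_rec) (use pos Lpos in \<open>auto simp: \<mu>_def\<close>)
    show "(\<lambda>n. (\<Sum>j<n. ln (L l (x l (Suc j)) \<theta>) - ln (L l (x l (Suc j)) \<theta>s)) / real n) \<longlonglongrightarrow> mv \<theta> l"
      if "l < N" for l using ces[OF that] .
  qed
  have exp_u: "exp (u \<theta> i k) = \<mu> i k \<theta> / \<mu> i k \<theta>s" for \<theta> i
    unfolding u_def using pos[OF kN] by (simp add: exp_diff)
  have sum_exp: "(\<Sum>\<theta>\<in>UNIV. exp (u \<theta> (Suc i) k)) = 1 / \<mu> (Suc i) k \<theta>s" for i
  proof -
    have "(\<Sum>\<theta>\<in>UNIV. exp (u \<theta> (Suc i) k)) = (\<Sum>\<theta>\<in>UNIV. \<mu> (Suc i) k \<theta>) / \<mu> (Suc i) k \<theta>s"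
      unfolding exp_u by (simp add: sum_divide_distrib)
    also have "(\<Sum>\<theta>\<in>UNIV. \<mu> (Suc i) k \<theta>) = 1" unfolding \<mu>_def by (rule belief_Suc_sum)
    finally show ?thesis .
  qed
  have exp0: "(\<lambda>i. exp (u \<theta> i k)) \<longlonglongrightarrow> 0" if "\<theta> \<noteq> \<theta>s" for \<theta>
  proof -
    have F: "filterlim (\<lambda>i. u \<theta> i k / real i * real i) at_bot sequentially"
      by (rule filterlim_tendsto_neg_mult_at_bot[OF ulim gneg[OF that, folded G_def] filterlim_real_sequentially])
    have ev: "eventually (\<lambda>i. u \<theta> i k / real i * real i = u \<theta> i k) sequentially"
      using eventually_gt_at_top[of 0] by eventually_elim simp
    have "filterlim (\<lambda>i. u \<theta> i k) at_bot sequentially"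
      using filterlim_cong[OF refl refl ev] F by simp
    then show ?thesis using filterlim_compose[OF exp_at_bot] by blast
  qed
  have sumlim: "(\<lambda>i. \<Sum>\<theta>\<in>UNIV. exp (u \<theta> i k)) \<longlonglongrightarrow> (\<Sum>\<theta>\<in>UNIV. if \<theta> = \<theta>s then 1 else 0)"
  proof (rule tendsto_sum)
    fix \<theta> :: 'h
    show "(\<lambda>i. exp (u \<theta> i k)) \<longlonglongrightarrow> (if \<theta> = \<theta>s then 1 else 0)"
    proof (cases "\<theta> = \<theta>s")
      case True then show ?thesis by (simp add: u_def)
    next
      case False then show ?thesis using exp0 by simp
    qed
  qed
  have lim1: "(\<lambda>i. \<mu> i k \<theta>s) \<longlonglongrightarrow> 1"
  proof -
    have "(\<lambda>i. \<Sum>\<theta>\<in>UNIV. exp (u \<theta> (Suc i) k)) \<longlonglongrightarrow> 1"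
      using LIMSEQ_Suc[OF sumlim] by simp
    hence "(\<lambda>i. inverse (\<Sum>\<theta>\<in>UNIV. exp (u \<theta> (Suc i) k))) \<longlonglongrightarrow> inverse 1"
      by (intro tendsto_inverse) auto
    hence "(\<lambda>i. \<mu> (Suc i) k \<theta>s) \<longlonglongrightarrow> 1" unfolding sum_exp by simp
    thus ?thesis using filterlim_sequentially_Suc[of "\<lambda>i. \<mu> i k \<theta>s"] by simp
  qed
  have lnlim: "(\<lambda>i. ln (\<mu> i k \<theta>s) / real i) \<longlonglongrightarrow> 0"
  proof -
    have "(\<lambda>i. ln (\<mu> i k \<theta>s) * inverse (real i)) \<longlonglongrightarrow> ln 1 * 0"
      by (intro tendsto_mult tendsto_ln lim1 lim_inverse_n) auto
    thus ?thesis by (simp add: divide_inverse)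
  qed
  show ?thesis
  proof (intro conjI allI impI)
    show "(\<lambda>i. belief A N L \<mu>0 x i k \<theta>s) \<longlonglongrightarrow> 1" using lim1 unfolding \<mu>_def .
    fix \<theta> assume "\<theta> \<noteq> \<theta>s"
    have "(\<lambda>i. u \<theta> i k / real i + ln (\<mu> i k \<theta>s) / real i) \<longlonglongrightarrow> G \<theta> + 0"
      by (intro tendsto_add ulim lnlim)
    moreover have "u \<theta> i k / real i + ln (\<mu> i k \<theta>s) / real i = ln (\<mu> i k \<theta>) / real i" for i
      unfolding u_def by (simp add: add_divide_distrib[symmetric])
    ultimately have "(\<lambda>i. ln (belief A N L \<mu>0 x i k \<theta>) / real i) \<longlonglongrightarrow> G \<theta>" unfolding \<mu>_def by simp
    then show "(\<lambda>i. ln (belief A N L \<mu>0 x i k \<theta>) / real i) \<longlonglongrightarrow> (\<Sum>l\<in>sending cmp N S. omega N A cmp S p B l k * mv \<theta> l)"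
      unfolding G_def .
  qed
qed

lemma KL_diff:
  fixes f g1 g2 :: "'x \<Rightarrow> real"
  assumes fm[measurable]: "f \<in> borel_measurable \<nu>"
    and g1m[measurable]: "g1 \<in> borel_measurable \<nu>" and g2m[measurable]: "g2 \<in> borel_measurable \<nu>"
    and K1: "KL_finite \<nu> f g1" and K2: "KL_finite \<nu> f g2"
  shows "integrable (density \<nu> (\<lambda>x. ennreal (f x))) (\<lambda>x. ln (g1 x) - ln (g2 x))"
    and "integral\<^sup>L (density \<nu> (\<lambda>x. ennreal (f x))) (\<lambda>x. ln (g1 x) - ln (g2 x)) = KL_div \<nu> f g2 - KL_div \<nu> f g1"
proof -
  let ?D = "density \<nu> (\<lambda>x. ennreal (f x))"
  have fpos: "AE x in ?D. 0 < f x"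
    by (subst AE_density) auto
  have AEeq: "AE x in ?D. ln (f x / g2 x) - ln (f x / g1 x) = ln (g1 x) - ln (g2 x)"
    using fpos K1 K2 unfolding KL_finite_def
  proof (elim conjE)
    assume a: "AE x in ?D. 0 < f x" "AE x in ?D. 0 < g1 x" "AE x in ?D. 0 < g2 x"
    show ?thesis using a(1) a(2) a(3) by eventually_elim (simp add: ln_div)
  qed
  have I1: "integrable ?D (\<lambda>x. ln (f x / g1 x))" and I2: "integrable ?D (\<lambda>x. ln (f x / g2 x))"
    using K1 K2 unfolding KL_finite_def by auto
  have m1: "(\<lambda>x. ln (f x / g2 x) - ln (f x / g1 x)) \<in> borel_measurable ?D" by measurable
  have m2: "(\<lambda>x. ln (g1 x) - ln (g2 x)) \<in> borel_measurable ?D" by measurable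
  have "integrable ?D (\<lambda>x. ln (f x / g2 x) - ln (f x / g1 x))" using I1 I2 by auto
  then show "integrable ?D (\<lambda>x. ln (g1 x) - ln (g2 x))"
    using integrable_cong_AE[OF m1 m2 AEeq] by simp
  have "integral\<^sup>L ?D (\<lambda>x. ln (g1 x) - ln (g2 x)) = integral\<^sup>L ?D (\<lambda>x. ln (f x / g2 x) - ln (f x / g1 x))"
    using integral_cong_AE[OF m1 m2 AEeq] by simp
  also have "\<dots> = integral\<^sup>L ?D (\<lambda>x. ln (f x / g2 x)) - integral\<^sup>L ?D (\<lambda>x. ln (f x / g1 x))"
    by (rule Bochner_Integration.integral_diff[OF I2 I1])
  finally show "integral\<^sup>L ?D (\<lambda>x. ln (g1 x) - ln (g2 x)) = KL_div \<nu> f g2 - KL_div \<nu> f g1"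
    unfolding KL_div_def .
qed

theorem theorem1:
  fixes M :: "'w measure"
    and \<nu> :: "nat \<Rightarrow> 'x measure"
    and \<xi> :: "nat \<Rightarrow> nat \<Rightarrow> 'w \<Rightarrow> 'x"
    and f :: "nat \<Rightarrow> 'x \<Rightarrow> real"
    and L :: "nat \<Rightarrow> 'x \<Rightarrow> 'h::finite \<Rightarrow> real"
    and \<mu>0 :: "nat \<Rightarrow> 'h \<Rightarrow> real"
    and A :: "nat \<Rightarrow> nat \<Rightarrow> real"
    and N S R :: nat
    and cmp :: "nat \<Rightarrow> nat"
    and p :: "nat \<Rightarrow> real"
    and B :: "nat \<Rightarrow> nat \<Rightarrow> real"
  assumes prob: "prob_space M"
    and f_nonneg: "\<forall>k<N. \<forall>x\<in>space (\<nu> k). 0 \<le> f k x"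
    and f_meas: "\<forall>k<N. f k \<in> borel_measurable (\<nu> k)"
    and L_nonneg: "\<forall>k<N. \<forall>\<theta>. \<forall>x\<in>space (\<nu> k). 0 \<le> L k x \<theta>"
    and L_meas: "\<forall>k<N. \<forall>\<theta>. (\<lambda>x. L k x \<theta>) \<in> borel_measurable (\<nu> k)"
    and L_density: "\<forall>k<N. \<forall>\<theta>. (\<integral>\<^sup>+ x. ennreal (L k x \<theta>) \<partial>(\<nu> k)) = 1"
    and data_distr: "\<forall>k<N. \<forall>i\<ge>1. distributed M (\<nu> k) (\<xi> k i) (\<lambda>x. ennreal (f k x))"
    and data_indep: "\<forall>k<N. prob_space.indep_vars M (\<lambda>_. \<nu> k) (\<xi> k) {1..}"
    and mu0_pmf: "\<forall>k<N. (\<forall>\<theta>. 0 \<le> \<mu>0 k \<theta>) \<and> (\<Sum>\<theta>\<in>UNIV. \<mu>0 k \<theta>) = 1"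
    and graph: "weak_graph N A cmp S R"
    and perron: "\<forall>s<S. perron_vec A (subnet cmp N s) p"
    and inv: "inverse_I_minus A (receiving cmp N S) B"
    and finite_KL: "\<forall>k<N. \<forall>\<theta>. KL_finite (\<nu> k) (f k) (\<lambda>x. L k x \<theta>)"
    and init_pos: "\<forall>k<N. \<forall>\<theta>. 0 < \<mu>0 k \<theta>"
    and unique_min: "\<forall>k\<in>receiving cmp N S. \<exists>!\<theta>.
                       \<forall>\<theta>'. Dscr N A cmp S p B \<nu> f L k \<theta> \<le> Dscr N A cmp S p B \<nu> f L k \<theta>'"
  shows "\<forall>k\<in>receiving cmp N S. \<forall>\<theta>s.
           (\<forall>\<theta>'. Dscr N A cmp S p B \<nu> f L k \<theta>s \<le> Dscr N A cmp S p B \<nu> f L k \<theta>') \<longrightarrow>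
           (AE \<omega> in M.
              (\<lambda>i. belief A N L \<mu>0 (\<lambda>l j. \<xi> l j \<omega>) i k \<theta>s) \<longlonglongrightarrow> 1 \<and>
              (\<forall>\<theta>. \<theta> \<noteq> \<theta>s \<longrightarrow>
                 (\<lambda>i. ln (belief A N L \<mu>0 (\<lambda>l j. \<xi> l j \<omega>) i k \<theta>) / real i)
                   \<longlonglongrightarrow> Dscr N A cmp S p B \<nu> f L k \<theta>s - Dscr N A cmp S p B \<nu> f L k \<theta>))"
proof (intro ballI allI impI)
  fix k \<theta>s
  assume k: "k \<in> receiving cmp N S"
    and \<theta>s: "\<forall>\<theta>'. Dscr N A cmp S p B \<nu> f L k \<theta>s \<le> Dscr N A cmp S p B \<nu> f L k \<theta>'"
  interpret prob_space M by (rule prob)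
  have kN: "k < N" using k unfolding receiving_def by auto
  define KL where "KL l \<theta> = KL_div (\<nu> l) (f l) (\<lambda>x. L l x \<theta>)" for l \<theta>
  define mv where "mv \<theta> l = KL l \<theta>s - KL l \<theta>" for \<theta> l
  have slln_l: "AE \<omega> in M. (\<lambda>n. (\<Sum>j<n. ln (L l (\<xi> l (Suc j) \<omega>) \<theta>) - ln (L l (\<xi> l (Suc j) \<omega>) \<theta>s)) / real n) \<longlonglongrightarrow> mv \<theta> l"
    if l: "l < N" for l \<theta>
  proof -
    have fm: "f l \<in> borel_measurable (\<nu> l)" using f_meas l by blast
    have g1m: "(\<lambda>x. L l x \<theta>) \<in> borel_measurable (\<nu> l)" and g2m: "(\<lambda>x. L l x \<theta>s) \<in> borel_measurable (\<nu> l)"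
      using L_meas l by blast+
    have K1: "KL_finite (\<nu> l) (f l) (\<lambda>x. L l x \<theta>)" and K2: "KL_finite (\<nu> l) (f l) (\<lambda>x. L l x \<theta>s)"
      using finite_KL l by blast+
    note KD = KL_diff[OF fm g1m g2m K1 K2]
    have hm: "(\<lambda>x. ln (L l x \<theta>) - ln (L l x \<theta>s)) \<in> borel_measurable (\<nu> l)"
      using g1m g2m by measurable
    have "AE \<omega> in M. (\<lambda>n. (\<Sum>j<n. ln (L l (\<xi> l (Suc j) \<omega>) \<theta>) - ln (L l (\<xi> l (Suc j) \<omega>) \<theta>s)) / real n)
            \<longlonglongrightarrow> integral\<^sup>L (density (\<nu> l) (\<lambda>x. ennreal (f l x))) (\<lambda>x. ln (L l x \<theta>) - ln (L l x \<theta>s))"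
      by (rule data_slln[OF prob _ _ hm KD(1)]) (use data_distr data_indep l in auto)
    then show ?thesis unfolding KD(2) mv_def KL_def .
  qed
  have Lpos_l: "AE \<omega> in M. 0 < L l (\<xi> l i \<omega>) \<theta>" if l: "l < N" and i: "1 \<le> i" for l i \<theta>
  proof -
    have d: "distributed M (\<nu> l) (\<xi> l i) (\<lambda>x. ennreal (f l x))" using data_distr l i by blast
    have "AE x in density (\<nu> l) (\<lambda>x. ennreal (f l x)). 0 < L l x \<theta>"
      using finite_KL l unfolding KL_finite_def by blast
    moreover have deq: "distr M (\<nu> l) (\<xi> l i) = density (\<nu> l) (\<lambda>x. ennreal (f l x))"
      using d unfolding distributed_def by blast
    ultimately have "AE x in distr M (\<nu> l) (\<xi> l i). 0 < L l x \<theta>" by (simp only: deq)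
    moreover have "\<xi> l i \<in> measurable M (\<nu> l)" using d unfolding distributed_def by blast
    ultimately show ?thesis using AE_distrD by blast
  qed
  have cntH: "countable (UNIV :: 'h set)" by (rule countable_finite) simp
  have AE1: "AE \<omega> in M. \<forall>l. l < N \<longrightarrow> (\<forall>\<theta>\<in>UNIV. (\<lambda>n. (\<Sum>j<n. ln (L l (\<xi> l (Suc j) \<omega>) \<theta>) - ln (L l (\<xi> l (Suc j) \<omega>) \<theta>s)) / real n) \<longlonglongrightarrow> mv \<theta> l)"
  proof (subst AE_all_countable, intro allI)
    fix l
    show "AE \<omega> in M. l < N \<longrightarrow> (\<forall>\<theta>\<in>UNIV. (\<lambda>n. (\<Sum>j<n. ln (L l (\<xi> l (Suc j) \<omega>) \<theta>) - ln (L l (\<xi> l (Suc j) \<omega>) \<theta>s)) / real n) \<longlonglongrightarrow> mv \<theta> l)"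
    proof (cases "l < N")
      case True
      have "AE \<omega> in M. \<forall>\<theta>\<in>UNIV. (\<lambda>n. (\<Sum>j<n. ln (L l (\<xi> l (Suc j) \<omega>) \<theta>) - ln (L l (\<xi> l (Suc j) \<omega>) \<theta>s)) / real n) \<longlonglongrightarrow> mv \<theta> l"
        unfolding AE_ball_countable[OF cntH] using slln_l[OF True] by blast
      then show ?thesis by (rule AE_mp) (auto intro!: AE_I2)
    qed simp
  qed
  have AE2: "AE \<omega> in M. \<forall>l. l < N \<longrightarrow> (\<forall>i. 1 \<le> i \<longrightarrow> (\<forall>\<theta>\<in>UNIV. 0 < L l (\<xi> l i \<omega>) \<theta>))"
  proof (subst AE_all_countable, intro allI)
    fix l
    show "AE \<omega> in M. l < N \<longrightarrow> (\<forall>i. 1 \<le> i \<longrightarrow> (\<forall>\<theta>\<in>UNIV. 0 < L l (\<xi> l i \<omega>) \<theta>))"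
    proof (cases "l < N")
      case True
      have "AE \<omega> in M. \<forall>i. 1 \<le> i \<longrightarrow> (\<forall>\<theta>\<in>UNIV. 0 < L l (\<xi> l i \<omega>) \<theta>)"
      proof (subst AE_all_countable, intro allI)
        fix i
        show "AE \<omega> in M. 1 \<le> i \<longrightarrow> (\<forall>\<theta>\<in>UNIV. 0 < L l (\<xi> l i \<omega>) \<theta>)"
        proof (cases "1 \<le> i")
          case True
          have "AE \<omega> in M. \<forall>\<theta>\<in>UNIV. 0 < L l (\<xi> l i \<omega>) \<theta>"
            unfolding AE_ball_countable[OF cntH] using Lpos_l[OF \<open>l < N\<close> True] by blast
          then show ?thesis by (rule AE_mp) (auto intro!: AE_I2)
        qed simp
      qed
      then show ?thesis by (rule AE_mp) (auto intro!: AE_I2)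
    qed simp
  qed
  have Dscr_diff: "(\<Sum>l\<in>sending cmp N S. omega N A cmp S p B l k * mv \<theta> l)
      = Dscr N A cmp S p B \<nu> f L k \<theta>s - Dscr N A cmp S p B \<nu> f L k \<theta>" for \<theta>
    unfolding Dscr_def mv_def KL_def by (simp add: sum_subtractf right_diff_distrib)
  have gneg: "(\<Sum>l\<in>sending cmp N S. omega N A cmp S p B l k * mv \<theta> l) < 0" if ne: "\<theta> \<noteq> \<theta>s" for \<theta>
  proof -
    have uq: "\<exists>!\<theta>. \<forall>\<theta>'. Dscr N A cmp S p B \<nu> f L k \<theta> \<le> Dscr N A cmp S p B \<nu> f L k \<theta>'"
      using unique_min k by blast
    have "\<not> Dscr N A cmp S p B \<nu> f L k \<theta> \<le> Dscr N A cmp S p B \<nu> f L k \<theta>s"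
    proof
      assume le: "Dscr N A cmp S p B \<nu> f L k \<theta> \<le> Dscr N A cmp S p B \<nu> f L k \<theta>s"
      hence "\<forall>\<theta>'. Dscr N A cmp S p B \<nu> f L k \<theta> \<le> Dscr N A cmp S p B \<nu> f L k \<theta>'"
        using \<theta>s by (meson order_trans)
      then show False using uq \<theta>s ne by blast
    qed
    then show ?thesis unfolding Dscr_diff by simp
  qed
  show "AE \<omega> in M. (\<lambda>i. belief A N L \<mu>0 (\<lambda>l j. \<xi> l j \<omega>) i k \<theta>s) \<longlonglongrightarrow> 1 \<and>
          (\<forall>\<theta>. \<theta> \<noteq> \<theta>s \<longrightarrow>
             (\<lambda>i. ln (belief A N L \<mu>0 (\<lambda>l j. \<xi> l j \<omega>) i k \<theta>) / real i)
               \<longlonglongrightarrow> Dscr N A cmp S p B \<nu> f L k \<theta>s - Dscr N A cmp S p B \<nu> f L k \<theta>)"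
    using AE1 AE2
  proof eventually_elim
    case (elim \<omega>)
    have res: "(\<lambda>i. belief A N L \<mu>0 (\<lambda>l j. \<xi> l j \<omega>) i k \<theta>s) \<longlonglongrightarrow> 1 \<and>
         (\<forall>\<theta>. \<theta> \<noteq> \<theta>s \<longrightarrow> (\<lambda>i. ln (belief A N L \<mu>0 (\<lambda>l j. \<xi> l j \<omega>) i k \<theta>) / real i)
            \<longlonglongrightarrow> (\<Sum>l\<in>sending cmp N S. omega N A cmp S p B l k * mv \<theta> l))"
    proof (rule det_part[OF graph perron inv k init_pos])
      show "0 < L l (\<xi> l i \<omega>) \<theta>" if "l < N" "1 \<le> i" for l i \<theta> using elim(2) that by blast
      show "(\<lambda>n. (\<Sum>j<n. ln (L l (\<xi> l (Suc j) \<omega>) \<theta>) - ln (L l (\<xi> l (Suc j) \<omega>) \<theta>s)) / real n) \<longlonglongrightarrow> mv \<theta> l"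
        if "l < N" for l \<theta> using elim(1) that by blast
      show "(\<Sum>l\<in>sending cmp N S. omega N A cmp S p B l k * mv \<theta> l) < 0" if "\<theta> \<noteq> \<theta>s" for \<theta>
        using gneg[OF that] .
    qed
    then show ?case unfolding Dscr_diff by simp
  qed
qed

end
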